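(* Let $|\psi\rangle=\sum_{n\ge0}\sqrt{p_n}|n\rangle$ and $|\phi\rangle=\sum_{n\ge0}\sqrt{q_n}|n\rangle$ be states of $\mathcal{H}'$, where $p_n,q_n\ge0$ and $\sum_np_n=\sum_nq_n=1$. There exists a deterministic (trace-preserving) U(1)-invariant operation $\mathcal{E}$ with $\mathcal{E}(|\psi\rangle\langle\psi|)=|\phi\rangle\langle\phi|$ if and only if there is a probability distribution $(w_k)_{k\in\mathbb{Z}}$ (i.e. $0\le w_k\le1$, $\sum_kw_k=1$) such that $$\vec p=\sum_{k=-\infty}^{\infty}w_k\Upsilon_k\vec q,$$ where $\vec p=(p_n)_{n\ge0}$, $\vec q=(q_n)_{n\ge0}$, and $\Upsilon_k$ is the shift defined by $(\Upsilon_k\vec q)_{m}=q_{m-k}$ for $m\ge0$ (with $q_{x}:=0$ for $x<0$).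
   Context: Let $\mathcal{H}'$ be the Hilbert space with orthonormal basis $\{|n\rangle: n=0,1,2,\dots\}$, let $\hat N=\sum_n n|n\rangle\langle n|$, and let U(1) act by $T(\phi)=e^{i\phi\hat N}$. A U(1)-invariant operation is a completely positive, trace-nonincreasing linear map $\mathcal{E}$ on operators on $\mathcal{H}'$ with $\mathcal{E}(T(\phi)XT(\phi)^\dagger)=T(\phi)\mathcal{E}(X)T(\phi)^\dagger$ for all $\phi,X$; it is deterministic if it is trace-preserving. *)

theory Defs
  imports "HOL-Analysis.Analysis"
begin

text \<open>Operators on the Hilbert space H' = l2(nat) with orthonormal basis |n>, represented
  by their matrices in that basis: X i j = <i|X|j>.\<close>

type_synonym mat = "nat \<Rightarrow> nat \<Rightarrow> complex"

definition hilbert_schmidt :: "mat \<Rightarrow> bool" where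
  "hilbert_schmidt B \<longleftrightarrow> (\<lambda>(i,j). (cmod (B i j))^2) summable_on UNIV"

text \<open>Trace class = products of two Hilbert-Schmidt operators (X = B^dagger C).\<close>
definition trace_class :: "mat \<Rightarrow> bool" where
  "trace_class X \<longleftrightarrow> (\<exists>B C. hilbert_schmidt B \<and> hilbert_schmidt C \<and>
      (\<forall>i j. X i j = (\<Sum>\<^sub>\<infinity>k. cnj (B k i) * C k j)))"

definition mtrace :: "mat \<Rightarrow> complex" where
  "mtrace X = (\<Sum>\<^sub>\<infinity>i. X i i)"

text \<open>Positivity of an n x n block matrix of operators, i.e. of an operator on
  C^n (tensor) H': nonnegative expectation on all finitely supported vectors.\<close>
definition block_pos :: "nat \<Rightarrow> (nat \<Rightarrow> nat \<Rightarrow> mat) \<Rightarrow> bool" where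
  "block_pos n Y \<longleftrightarrow> (\<forall>S v. finite S \<longrightarrow>
     (let z = (\<Sum>a<n. \<Sum>b<n. \<Sum>i\<in>S. \<Sum>j\<in>S. cnj (v a i) * Y a b i j * v b j)
      in Im z = 0 \<and> 0 \<le> Re z))"

definition mat_pos :: "mat \<Rightarrow> bool" where
  "mat_pos X \<longleftrightarrow> block_pos 1 (\<lambda>a b. X)"

text \<open>Conjugation by T(phi) = exp(i phi N): entries get multiplied by exp(i phi (m - n)).\<close>
definition rot :: "real \<Rightarrow> mat \<Rightarrow> mat" where
  "rot \<phi> X = (\<lambda>m n. cis (\<phi> * real m) * X m n * cnj (cis (\<phi> * real n)))"

definition u1_operation :: "(mat \<Rightarrow> mat) \<Rightarrow> bool" where
  "u1_operation E \<longleftrightarrow>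
     (\<forall>X. trace_class X \<longrightarrow> trace_class (E X)) \<and>
     (\<forall>X Y. trace_class X \<longrightarrow> trace_class Y \<longrightarrow>
         E (\<lambda>i j. X i j + Y i j) = (\<lambda>i j. E X i j + E Y i j)) \<and>
     (\<forall>X c. trace_class X \<longrightarrow> E (\<lambda>i j. c * X i j) = (\<lambda>i j. c * E X i j)) \<and>
     (\<forall>n Y. (\<forall>a<n. \<forall>b<n. trace_class (Y a b)) \<longrightarrow> block_pos n Y \<longrightarrow>
         block_pos n (\<lambda>a b. E (Y a b))) \<and>
     (\<forall>X. trace_class X \<longrightarrow> mat_pos X \<longrightarrow> Re (mtrace (E X)) \<le> Re (mtrace X)) \<and>
     (\<forall>\<phi> X. trace_class X \<longrightarrow> E (rot \<phi> X) = rot \<phi> (E X))"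

definition deterministic_u1_operation :: "(mat \<Rightarrow> mat) \<Rightarrow> bool" where
  "deterministic_u1_operation E \<longleftrightarrow> u1_operation E \<and>
     (\<forall>X. trace_class X \<longrightarrow> mtrace (E X) = mtrace X)"

text \<open>|psi><psi| for psi = sum_n sqrt(p n) |n>.\<close>
definition sqrt_state_proj :: "(nat \<Rightarrow> real) \<Rightarrow> mat" where
  "sqrt_state_proj p = (\<lambda>m n. complex_of_real (sqrt (p m) * sqrt (p n)))"

definition shift_vec :: "int \<Rightarrow> (nat \<Rightarrow> real) \<Rightarrow> nat \<Rightarrow> real" where
  "shift_vec k q m = (if int m - k \<ge> 0 then q (nat (int m - k)) else 0)"

end

theory Submission imports Defs "HOL-Library.Countable" begin


definition l2 :: "(nat \<Rightarrow> complex) \<Rightarrow> bool" where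
  "l2 x \<longleftrightarrow> (\<lambda>i. (cmod (x i))^2) summable_on UNIV"
definition nrm :: "(nat \<Rightarrow> complex) \<Rightarrow> real" where
  "nrm x = (\<Sum>\<^sub>\<infinity>i. (cmod (x i))^2)"
definition rk1 :: "(nat \<Rightarrow> complex) \<Rightarrow> (nat \<Rightarrow> complex) \<Rightarrow> mat" where
  "rk1 x y = (\<lambda>i j. x i * cnj (y j))"
definition dl :: "nat \<Rightarrow> nat \<Rightarrow> complex" where
  "dl a = (\<lambda>i. if i = a then 1 else 0)"

lemma infsum_single_nat:
  "(\<Sum>\<^sub>\<infinity>k. (if k = a then f k else (0::'b::{comm_monoid_add,t2_space}))) = f a"
proof -
  have "(\<Sum>\<^sub>\<infinity>k. (if k = a then f k else 0)) = (\<Sum>\<^sub>\<infinity>k\<in>{a}. (if k = a then f k else 0))"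
    by (rule infsum_cong_neutral) auto
  then show ?thesis by simp
qed

lemma hs_row0:
  assumes "l2 x"
  shows "hilbert_schmidt (\<lambda>k i. if k = 0 then x i else 0)"
proof -
  have "(\<lambda>(k,i). (cmod (if k = 0 then x i else 0))^2) summable_on range (Pair (0::nat))"
    using assms unfolding l2_def
    by (subst summable_on_reindex) (auto simp: o_def inj_on_def)
  then show ?thesis unfolding hilbert_schmidt_def
    by (subst summable_on_cong_neutral[of "range (Pair 0)" UNIV _ "\<lambda>(k,i). (cmod (if k = 0 then x i else 0))^2"]) 
       (auto split: if_splits)
qed

lemma rk1_tc:
  assumes "l2 x" "l2 y"
  shows "trace_class (rk1 x y)"
proof -
  have lx: "l2 (\<lambda>i. cnj (x i))" "l2 (\<lambda>i. cnj (y i))" using assms by (auto simp: l2_def)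
  show ?thesis
    unfolding trace_class_def
  proof (intro exI conjI allI)
    show "hilbert_schmidt (\<lambda>k i. if k = 0 then cnj (x i) else 0)"
      "hilbert_schmidt (\<lambda>k i. if k = 0 then cnj (y i) else 0)" using hs_row0 lx by auto
    fix i j
    show "rk1 x y i j = (\<Sum>\<^sub>\<infinity>k. cnj (if k = 0 then cnj (x i) else 0) * (if k = 0 then cnj (y j) else 0))"
      by (subst infsum_cong[where g="\<lambda>k. if k = 0 then x i * cnj (y j) else 0"])
         (auto simp: infsum_single_nat rk1_def)
  qed
qed



lemma bp_rk1: "block_pos n (\<lambda>a b. rk1 (z a) (z b))"
  unfolding block_pos_def Let_def
proof (intro allI impI)
  fix S :: "nat set" and v :: "nat \<Rightarrow> nat \<Rightarrow> complex"
  assume "finite S"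
  define s where "s = (\<Sum>a<n. \<Sum>i\<in>S. cnj (v a i) * z a i)"
  have "(\<Sum>a<n. \<Sum>b<n. \<Sum>i\<in>S. \<Sum>j\<in>S. cnj (v a i) * rk1 (z a) (z b) i j * v b j) = s * cnj s"
  proof -
    have "s * cnj s = (\<Sum>a<n. \<Sum>i\<in>S. cnj (v a i) * z a i) * (\<Sum>b<n. \<Sum>j\<in>S. v b j * cnj (z b j))"
      unfolding s_def by (simp add: cnj_sum)
    also have "\<dots> = (\<Sum>a<n. \<Sum>b<n. \<Sum>i\<in>S. \<Sum>j\<in>S. (cnj (v a i) * z a i) * (v b j * cnj (z b j)))"
      by (simp only: sum_product)
    finally show ?thesis unfolding rk1_def by (simp add: mult_ac)
  qed
  also have "\<dots> = complex_of_real ((Re s)^2 + (Im s)^2)" by (rule complex_mult_cnj)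
  finally show "Im (\<Sum>a<n. \<Sum>b<n. \<Sum>i\<in>S. \<Sum>j\<in>S. cnj (v a i) * rk1 (z a) (z b) i j * v b j) = 0 \<and>
    0 \<le> Re (\<Sum>a<n. \<Sum>b<n. \<Sum>i\<in>S. \<Sum>j\<in>S. cnj (v a i) * rk1 (z a) (z b) i j * v b j)"
    by simp
qed

lemma block2_gen:
  fixes u :: "nat \<Rightarrow> complex" and \<beta> :: complex
  assumes "block_pos 2 Y" "finite S" "j \<in> S"
  defines "Q \<equiv> (\<Sum>x\<in>S. \<Sum>y\<in>S. cnj (u x) * Y 0 0 x y * u y) + (\<Sum>x\<in>S. cnj (u x) * Y 0 1 x j) * \<beta>
     + cnj \<beta> * (\<Sum>y\<in>S. Y 1 0 j y * u y) + cnj \<beta> * Y 1 1 j j * \<beta>"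
  shows "Im Q = 0 \<and> 0 \<le> Re Q"
proof -
  define v :: "nat \<Rightarrow> nat \<Rightarrow> complex" where "v = (\<lambda>a x. if a = 0 then u x else if x = j then \<beta> else 0)"
  note bp = assms(1)[unfolded block_pos_def, rule_format, OF assms(2), of v]
  have d1: "(\<Sum>y\<in>S. f y * (if y = j then \<beta> else 0)) = f j * \<beta>" for f
  proof -
    have "(\<Sum>y\<in>S. f y * (if y = j then \<beta> else 0)) = (\<Sum>y\<in>S. if y = j then f j * \<beta> else 0)"
      by (rule sum.cong) auto
    then show ?thesis using assms(2,3) by simp
  qed
  have d2: "(\<Sum>y\<in>S. cnj (if y = j then \<beta> else 0) * f y) = cnj \<beta> * f j" for f
  proof -
    have "(\<Sum>y\<in>S. cnj (if y = j then \<beta> else 0) * f y) = (\<Sum>y\<in>S. if y = j then cnj \<beta> * f j else 0)"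
      by (rule sum.cong) auto
    then show ?thesis using assms(2,3) by simp
  qed
  have e: "(\<Sum>a<2::nat. \<Sum>b<2::nat. \<Sum>i\<in>S. \<Sum>j\<in>S. cnj (v a i) * Y a b i j * v b j)
    = (\<Sum>i\<in>S. \<Sum>j'\<in>S. cnj (v 0 i) * Y 0 0 i j' * v 0 j') + (\<Sum>i\<in>S. \<Sum>j'\<in>S. cnj (v 0 i) * Y 0 1 i j' * v 1 j')
     + (\<Sum>i\<in>S. \<Sum>j'\<in>S. cnj (v 1 i) * Y 1 0 i j' * v 0 j') + (\<Sum>i\<in>S. \<Sum>j'\<in>S. cnj (v 1 i) * Y 1 1 i j' * v 1 j')"
    by (simp add: numeral_2_eq_2 lessThan_Suc)
  have v0: "v 0 = u" and v1: "v 1 = (\<lambda>x. if x = j then \<beta> else 0)" by (simp_all add: v_def)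
  have t2: "(\<Sum>i\<in>S. \<Sum>j'\<in>S. cnj (v 0 i) * Y 0 1 i j' * v 1 j') = (\<Sum>x\<in>S. cnj (u x) * Y 0 1 x j) * \<beta>"
      unfolding v0 v1 d1 by (simp add: sum_distrib_right)
  have t3: "(\<Sum>i\<in>S. \<Sum>j'\<in>S. cnj (v 1 i) * Y 1 0 i j' * v 0 j') = cnj \<beta> * (\<Sum>y\<in>S. Y 1 0 j y * u y)"
      unfolding v0 v1 
      by (subst sum.swap) (simp only: mult.assoc d2 flip: sum_distrib_left)
  have t4: "(\<Sum>i\<in>S. \<Sum>j'\<in>S. cnj (v 1 i) * Y 1 1 i j' * v 1 j') = cnj \<beta> * Y 1 1 j j * \<beta>"
      unfolding v1 d1 by (simp only: mult.assoc d2)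
  have "(\<Sum>a<2::nat. \<Sum>b<2::nat. \<Sum>i\<in>S. \<Sum>j\<in>S. cnj (v a i) * Y a b i j * v b j) = Q"
    unfolding e t2 t3 t4 Q_def by (simp add: v0)
  with bp show ?thesis by (simp add: Let_def)
qed


lemma sum_dl_l: "finite S \<Longrightarrow> i \<in> S \<Longrightarrow> (\<Sum>x\<in>S. cnj (if x = i then \<alpha> else 0) * f x) = cnj \<alpha> * f i"
proof -
  assume "finite S" "i \<in> S"
  have "(\<Sum>x\<in>S. cnj (if x = i then \<alpha> else 0) * f x) = (\<Sum>x\<in>S. if x = i then cnj \<alpha> * f i else 0)"
    by (rule sum.cong) auto
  then show ?thesis using \<open>finite S\<close> \<open>i \<in> S\<close> by simp
qed

lemma sum_dl_r: "finite S \<Longrightarrow> i \<in> S \<Longrightarrow> (\<Sum>x\<in>S. f x * (if x = i then \<alpha> else (0::complex))) = f i * \<alpha>"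
proof -
  assume "finite S" "i \<in> S"
  have "(\<Sum>x\<in>S. f x * (if x = i then \<alpha> else 0)) = (\<Sum>x\<in>S. if x = i then f i * \<alpha> else 0)"
    by (rule sum.cong) auto
  then show ?thesis using \<open>finite S\<close> \<open>i \<in> S\<close> by simp
qed

lemma block2_pt:
  fixes \<alpha> \<beta> :: complex and i j :: nat
  assumes "block_pos 2 Y"
  defines "Q \<equiv> cnj \<alpha> * Y 0 0 i i * \<alpha> + cnj \<alpha> * Y 0 1 i j * \<beta> + cnj \<beta> * Y 1 0 j i * \<alpha> + cnj \<beta> * Y 1 1 j j * \<beta>"
  shows "Im Q = 0 \<and> 0 \<le> Re Q"
proof -
  have f: "finite {i,j}" "i \<in> {i,j}" "j \<in> {i,j}" by auto
  note g = block2_gen[OF assms(1) f(1) f(3), of "\<lambda>x. if x = i then \<alpha> else 0" \<beta>]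
  have s1: "(\<Sum>x\<in>{i,j}. \<Sum>y\<in>{i,j}. cnj (if x = i then \<alpha> else 0) * Y 0 0 x y * (if y = i then \<alpha> else 0))
     = cnj \<alpha> * Y 0 0 i i * \<alpha>"
    apply (simp only: sum_dl_r[OF f(1,2)])
    apply (simp only: mult.assoc sum_dl_l[OF f(1,2)])
    done
  have s2: "(\<Sum>x\<in>{i,j}. cnj (if x = i then \<alpha> else 0) * Y 0 1 x j) = cnj \<alpha> * Y 0 1 i j"
    by (rule sum_dl_l[OF f(1,2)])
  have s3: "(\<Sum>y\<in>{i,j}. Y 1 0 j y * (if y = i then \<alpha> else 0)) = Y 1 0 j i * \<alpha>"
    by (rule sum_dl_r[OF f(1,2)])
  show ?thesis using g unfolding s1 s2 s3 Q_def by (simp add: mult_ac)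
qed


lemma quad_lemma:
  fixes a B c :: real
  assumes "\<And>t. 0 \<le> a * t^2 * B - 2 * t * B + c" "0 \<le> a" "0 \<le> B"
  shows "B \<le> a * c"
proof (cases "B = 0")
  case True then show ?thesis using assms(1)[of 0] assms(2) by simp
next
  case False
  then have Bp: "B > 0" using assms(3) by simp
  show ?thesis
  proof (cases "a = 0")
    case True
    define t where "t = (c+1)/(2*B)"
    have h0: "0 \<le> a * t^2 * B - 2 * t * B + c" by (rule assms(1))
    have h1: "a * t^2 * B = 0" using True by simp
    have h2: "2 * t * B = c + 1" unfolding t_def using Bp by (simp add: field_simps)
    show ?thesis using h0 h1 h2 by linarith
  next
    case False
    then have ap: "a > 0" using assms(2) by simp
    have "0 \<le> a * (1/a)^2 * B - 2 * (1/a) * B + c" by (rule assms(1))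
    also have "\<dots> = (a * c - B) / a" using ap by (simp add: field_simps power2_eq_square)
    finally show ?thesis using ap by (simp add: zero_le_divide_iff)
  qed
qed

lemma block2_facts:
  assumes "block_pos 2 Y"
  shows "Im (Y 0 0 i i) = 0" "0 \<le> Re (Y 0 0 i i)" "Im (Y 1 1 j j) = 0" "0 \<le> Re (Y 1 1 j j)"
    "Y 1 0 j i = cnj (Y 0 1 i j)" "(cmod (Y 0 1 i j))^2 \<le> Re (Y 0 0 i i) * Re (Y 1 1 j j)"
proof -
  note P = block2_pt[OF assms, of _ i j]
  show a1: "Im (Y 0 0 i i) = 0" "0 \<le> Re (Y 0 0 i i)" using P[of 1 0] by auto
  show a2: "Im (Y 1 1 j j) = 0" "0 \<le> Re (Y 1 1 j j)" using P[of 0 1] by auto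
  have h1: "Im (Y 0 1 i j) + Im (Y 1 0 j i) = 0" using P[of 1 1] a1 a2 by simp
  have h2: "Re (Y 0 1 i j) - Re (Y 1 0 j i) = 0" using P[of 1 \<i>] a1 a2 by simp
  show hc: "Y 1 0 j i = cnj (Y 0 1 i j)" using h1 h2 by (simp add: complex_eq_iff)
  define a where "a = Re (Y 0 0 i i)"
  define c where "c = Re (Y 1 1 j j)"
  define b where "b = Y 0 1 i j"
  have ya: "Y 0 0 i i = complex_of_real a" using a1 unfolding a_def by (simp add: complex_eq_iff)
  have yc: "Y 1 1 j j = complex_of_real c" using a2 unfolding c_def by (simp add: complex_eq_iff)
  have key: "0 \<le> a * t^2 * (cmod b)^2 - 2 * t * (cmod b)^2 + c" for t
  proof -
    have "0 \<le> Re (cnj (-(of_real t * b)) * Y 0 0 i i * (-(of_real t * b)) + cnj (-(of_real t * b)) * Y 0 1 i j * 1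
        + cnj 1 * Y 1 0 j i * (-(of_real t * b)) + cnj 1 * Y 1 1 j j * 1)" using P[of "-(of_real t * b)" 1] by simp
    also have "\<dots> = a * t^2 * (cmod b)^2 - 2 * t * (cmod b)^2 + c"
      unfolding ya yc hc b_def[symmetric] cmod_power2 by (simp add: algebra_simps power2_eq_square)
    finally show ?thesis .
  qed
  have "(cmod b)^2 \<le> a * c"
    by (rule quad_lemma[OF key]) (use a1(2) in \<open>simp_all add: a_def\<close>)
  then show "(cmod (Y 0 1 i j))^2 \<le> Re (Y 0 0 i i) * Re (Y 1 1 j j)"
    unfolding a_def c_def b_def .
qed

lemma sum_dl2_l: "finite S \<Longrightarrow> i \<in> S \<Longrightarrow> k \<in> S \<Longrightarrow>
  (\<Sum>x\<in>S. cnj ((if x = i then \<alpha> else 0) + (if x = k then \<gamma> else 0)) * f x) = cnj \<alpha> * f i + cnj \<gamma> * f k"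
  by (simp only: complex_cnj_add distrib_right sum.distrib sum_dl_l)

lemma sum_dl2_r: "finite S \<Longrightarrow> i \<in> S \<Longrightarrow> k \<in> S \<Longrightarrow>
  (\<Sum>x\<in>S. f x * ((if x = i then \<alpha> else 0) + (if x = k then \<gamma> else (0::complex)))) = f i * \<alpha> + f k * \<gamma>"
  by (simp only: distrib_left sum.distrib sum_dl_r)

lemma rank1_col:
  assumes "block_pos 2 Y" "Y 0 0 = (\<lambda>i j. complex_of_real (\<phi> i) * complex_of_real (\<phi> j))"
  shows "complex_of_real (\<phi> i0) * Y 0 1 i j = complex_of_real (\<phi> i) * Y 0 1 i0 j"
proof (cases "i = i0")
  case True then show ?thesis by simp
next
  case False
  define S where "S = {i, i0, j}"
  have fS: "finite S" "i \<in> S" "i0 \<in> S" "j \<in> S" unfolding S_def by auto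
  define u where "u = (\<lambda>x. (if x = i then complex_of_real (\<phi> i0) else 0) + (if x = i0 then - complex_of_real (\<phi> i) else 0))"
  define D where "D = complex_of_real (\<phi> i0) * Y 0 1 i j - complex_of_real (\<phi> i) * Y 0 1 i0 j"
  define c where "c = Re (Y 1 1 j j)"
  have yc: "Y 1 1 j j = complex_of_real c" using block2_facts(3)[OF assms(1), of j] unfolding c_def
    by (simp add: complex_eq_iff)
  have c0: "0 \<le> c" using block2_facts(4)[OF assms(1), of j] unfolding c_def .
  have s0: "(\<Sum>y\<in>S. complex_of_real (\<phi> y) * u y) = 0"
    unfolding u_def by (simp only: sum_dl2_r[OF fS(1,2,3)]) simp
  have q1: "(\<Sum>x\<in>S. \<Sum>y\<in>S. cnj (u x) * Y 0 0 x y * u y) = 0"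
  proof -
    have "(\<Sum>x\<in>S. \<Sum>y\<in>S. cnj (u x) * Y 0 0 x y * u y)
        = (\<Sum>x\<in>S. \<Sum>y\<in>S. (cnj (u x) * complex_of_real (\<phi> x)) * (complex_of_real (\<phi> y) * u y))"
      unfolding assms(2) by (simp add: mult_ac)
    also have "\<dots> = (\<Sum>x\<in>S. cnj (u x) * complex_of_real (\<phi> x)) * (\<Sum>y\<in>S. complex_of_real (\<phi> y) * u y)"
      by (simp only: sum_product)
    finally show ?thesis using s0 by simp
  qed
  have q2: "(\<Sum>x\<in>S. cnj (u x) * Y 0 1 x j) = D"
    unfolding u_def D_def by (simp only: sum_dl2_l[OF fS(1,2,3)]) simp
  have q3: "(\<Sum>y\<in>S. Y 1 0 j y * u y) = cnj D"
    unfolding u_def D_def 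
    by (simp only: sum_dl2_r[OF fS(1,2,3)] block2_facts(5)[OF assms(1)]) (simp add: mult.commute)
  have key: "0 \<le> c * t^2 * (cmod D)^2 - 2 * t * (cmod D)^2 + 0" for t
  proof -
    define \<beta> where "\<beta> = - (complex_of_real t * cnj D)"
    note g = block2_gen[OF assms(1) fS(1) fS(4), of u \<beta>]
    have "0 \<le> Re (0 + D * \<beta> + cnj \<beta> * cnj D + cnj \<beta> * complex_of_real c * \<beta>)"
      using g unfolding q1 q2 q3 yc by simp
    also have "\<dots> = c * t^2 * (cmod D)^2 - 2 * t * (cmod D)^2 + 0"
      unfolding \<beta>_def cmod_power2 by (simp add: algebra_simps power2_eq_square)
    finally show ?thesis .
  qed
  have "(cmod D)^2 \<le> c * 0" by (rule quad_lemma[OF key c0]) simp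
  then have "D = 0" by simp
  then show ?thesis unfolding D_def by simp
qed



definition trunc :: "nat \<Rightarrow> (nat \<Rightarrow> complex) \<Rightarrow> nat \<Rightarrow> complex" where
  "trunc N x = (\<lambda>a. if a < N then x a else 0)"
definition tail :: "nat \<Rightarrow> (nat \<Rightarrow> complex) \<Rightarrow> nat \<Rightarrow> complex" where
  "tail N x = (\<lambda>a. if a < N then 0 else x a)"

lemma l2_mono: "l2 x \<Longrightarrow> (\<And>a. cmod (y a) \<le> cmod (x a)) \<Longrightarrow> l2 y"
  unfolding l2_def by (rule summable_on_comparison_test) (auto intro: power_mono)

lemma l2_trunc: "l2 x \<Longrightarrow> l2 (trunc N x)" by (erule l2_mono) (auto simp: trunc_def)
lemma l2_tail: "l2 x \<Longrightarrow> l2 (tail N x)" by (erule l2_mono) (auto simp: tail_def)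

lemma l2_dl: "l2 (dl a)"
proof -
  have "(\<lambda>i. (cmod (dl a i))^2) summable_on {a}" by simp
  then show ?thesis unfolding l2_def
    by (subst summable_on_cong_neutral[of "{a}" UNIV _ "\<lambda>i. (cmod (dl a i))^2"]) (auto simp: dl_def)
qed

lemma nrm_nonneg: "0 \<le> nrm x" unfolding nrm_def by (rule infsum_nonneg) simp

lemma nrm_dl: "nrm (dl a) = 1"
proof -
  have "nrm (dl a) = (\<Sum>\<^sub>\<infinity>i\<in>{a}. (cmod (dl a i))^2)" unfolding nrm_def
    by (rule infsum_cong_neutral) (auto simp: dl_def)
  then show ?thesis by (simp add: dl_def)
qed

lemma nrm_trunc_le: "l2 x \<Longrightarrow> nrm (trunc N x) \<le> nrm x"
  unfolding nrm_def l2_def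
  by (rule infsum_mono[OF l2_trunc[unfolded l2_def]]) (auto simp: trunc_def l2_def)

lemma nrm_tail: 
  assumes "l2 x" shows "nrm (tail N x) = nrm x - (\<Sum>a<N. (cmod (x a))^2)"
proof -
  have u: "{..<N} \<union> {N..} = (UNIV::nat set)" by auto
  have "nrm x = (\<Sum>\<^sub>\<infinity>a\<in>{..<N} \<union> {N..}. (cmod (x a))^2)" unfolding nrm_def u ..
  also have "\<dots> = (\<Sum>\<^sub>\<infinity>a\<in>{..<N}. (cmod (x a))^2) + (\<Sum>\<^sub>\<infinity>a\<in>{N..}. (cmod (x a))^2)"
    using assms unfolding l2_def by (intro infsum_Un_disjoint) (auto intro: summable_on_subset_banach)
  also have "(\<Sum>\<^sub>\<infinity>a\<in>{N..}. (cmod (x a))^2) = nrm (tail N x)" unfolding nrm_def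
    by (rule infsum_cong_neutral) (auto simp: tail_def)
  finally show ?thesis by simp
qed

lemma nrm_tail_lim: 
  assumes "l2 x" shows "(\<lambda>N. nrm (tail N x)) \<longlonglongrightarrow> 0"
proof -
  have "(\<lambda>a. (cmod (x a))^2) sums nrm x"
    using assms unfolding l2_def nrm_def by (intro has_sum_imp_sums) simp
  then have "(\<lambda>N. \<Sum>a<N. (cmod (x a))^2) \<longlonglongrightarrow> nrm x" by (simp add: sums_def)
  then have "(\<lambda>N. nrm x - (\<Sum>a<N. (cmod (x a))^2)) \<longlonglongrightarrow> nrm x - nrm x"
    by (intro tendsto_intros)
  then show ?thesis using nrm_tail[OF assms] by simp
qed

lemma rk1_split1: "rk1 x y = (\<lambda>i j. rk1 (trunc N x) y i j + rk1 (tail N x) y i j)"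
  by (auto simp: rk1_def trunc_def tail_def fun_eq_iff)
lemma rk1_split2: "rk1 x y = (\<lambda>i j. rk1 x (trunc N y) i j + rk1 x (tail N y) i j)"
  by (auto simp: rk1_def trunc_def tail_def fun_eq_iff)

context
  fixes E :: "mat \<Rightarrow> mat"
  assumes det: "deterministic_u1_operation E"
begin

lemma E_tc: "trace_class X \<Longrightarrow> trace_class (E X)"
  using det unfolding deterministic_u1_operation_def u1_operation_def by blast
lemma E_add: "trace_class X \<Longrightarrow> trace_class Y \<Longrightarrow> E (\<lambda>i j. X i j + Y i j) = (\<lambda>i j. E X i j + E Y i j)"
  using det unfolding deterministic_u1_operation_def u1_operation_def by blast
lemma E_scale: "trace_class X \<Longrightarrow> E (\<lambda>i j. c * X i j) = (\<lambda>i j. c * E X i j)"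
  using det unfolding deterministic_u1_operation_def u1_operation_def by blast
lemma E_cp: "(\<And>a b. a < n \<Longrightarrow> b < n \<Longrightarrow> trace_class (Y a b)) \<Longrightarrow> block_pos n Y \<Longrightarrow> block_pos n (\<lambda>a b. E (Y a b))"
  using det unfolding deterministic_u1_operation_def u1_operation_def by blast
lemma E_tr: "trace_class X \<Longrightarrow> mtrace (E X) = mtrace X"
  using det unfolding deterministic_u1_operation_def by blast
lemma E_rot: "trace_class X \<Longrightarrow> E (rot \<phi> X) = rot \<phi> (E X)"
  using det unfolding deterministic_u1_operation_def u1_operation_def by blast

lemma E_rk1_add1: "l2 x1 \<Longrightarrow> l2 x2 \<Longrightarrow> l2 y \<Longrightarrow> 
   E (\<lambda>i j. rk1 x1 y i j + rk1 x2 y i j) i j = E (rk1 x1 y) i j + E (rk1 x2 y) i j"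
  by (simp add: E_add rk1_tc)

lemma E_rk1_2: 
  assumes "l2 x" "l2 y"
  shows "block_pos 2 (\<lambda>a b. E (rk1 (if a = 0 then x else y) (if b = 0 then x else y)))"
  by (rule E_cp) (use assms in \<open>auto simp: rk1_tc bp_rk1\<close>)

lemma E_diag:
  assumes "l2 x"
  shows "Im (E (rk1 x x) i i) = 0" "0 \<le> Re (E (rk1 x x) i i)" "Re (E (rk1 x x) i i) \<le> nrm x"
proof -
  note b = E_rk1_2[OF assms assms]
  show "Im (E (rk1 x x) i i) = 0" "0 \<le> Re (E (rk1 x x) i i)" using block2_facts(1,2)[OF b, of i] by auto
  show "Re (E (rk1 x x) i i) \<le> nrm x"
  proof (cases "nrm x = 0")
    case True
    have "\<And>a. (cmod (x a))^2 = 0"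
      using True assms unfolding nrm_def l2_def by (intro nonneg_infsum_le_0D) auto
    then have x0: "x = (\<lambda>a. 0)" by auto
    have "rk1 x x = (\<lambda>i j. 0 * rk1 x x i j)" by (simp add: x0 rk1_def)
    then have "E (rk1 x x) = (\<lambda>i j. 0 * E (rk1 x x) i j)" using E_scale[OF rk1_tc[OF assms assms], of 0] by simp
    then show ?thesis using True by (simp add: fun_eq_iff)
  next
    case False
    have tc: "trace_class (rk1 x x)" by (rule rk1_tc[OF assms assms])
    have "mtrace (rk1 x x) = (\<Sum>\<^sub>\<infinity>a. x a * cnj (x a))"
      unfolding mtrace_def rk1_def by simp
    also have "\<dots> = (\<Sum>\<^sub>\<infinity>a. complex_of_real ((cmod (x a))^2))"
      by (simp only: complex_norm_square)
    also have "\<dots> = complex_of_real (nrm x)" 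
      unfolding nrm_def
      by (intro infsumI has_sum_of_real has_sum_infsum) (use assms in \<open>simp add: l2_def\<close>)
    finally have tr: "(\<Sum>\<^sub>\<infinity>a. E (rk1 x x) a a) = complex_of_real (nrm x)"
      using E_tr[OF tc] unfolding mtrace_def by simp
    then have sm: "(\<lambda>a. E (rk1 x x) a a) summable_on UNIV" using False infsum_not_exists by force
    have "Re (E (rk1 x x) i i) = (\<Sum>a\<in>{i}. Re (E (rk1 x x) a a))" by simp
    also have "\<dots> \<le> (\<Sum>\<^sub>\<infinity>a. Re (E (rk1 x x) a a))"
      using block2_facts(2)[OF b] by (intro finite_sum_le_infsum summable_on_Re sm) auto
    also have "\<dots> = nrm x" using infsum_Re[OF sm] tr by simp
    finally show ?thesis .
  qed
qed

lemma E_bound: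
  assumes "l2 x" "l2 y"
  shows "(cmod (E (rk1 x y) i j))^2 \<le> nrm x * nrm y"
proof -
  note b = E_rk1_2[OF assms]
  have "(cmod (E (rk1 x y) i j))^2 \<le> Re (E (rk1 x x) i i) * Re (E (rk1 y y) j j)"
    using block2_facts(6)[OF b, of i j] by simp
  also have "\<dots> \<le> nrm x * nrm y"
    using E_diag[OF assms(1), of i] E_diag[OF assms(2), of j] by (intro mult_mono) auto
  finally show ?thesis .
qed

lemma E_bound': 
  assumes "l2 x" "l2 y"
  shows "cmod (E (rk1 x y) i j) \<le> sqrt (nrm x * nrm y)"
  using E_bound[OF assms, of i j] by (simp add: real_le_rsqrt)

end


lemma rot_rk1_dl: "rot \<theta> (rk1 (dl a) (dl b)) = (\<lambda>i j. cis (\<theta> * real a - \<theta> * real b) * rk1 (dl a) (dl b) i j)"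
  by (auto simp: rot_def rk1_def dl_def fun_eq_iff cis_cnj cis_mult)

lemma l2_zero: "l2 (\<lambda>a. 0)" unfolding l2_def by simp

lemma l2_trunc_any: "l2 (trunc N x)"
proof -
  have "(\<lambda>i. (cmod (trunc N x i))^2) summable_on {..<N}" by simp
  then show ?thesis unfolding l2_def
    by (subst summable_on_cong_neutral[of "{..<N}" UNIV _ "\<lambda>i. (cmod (trunc N x i))^2"]) (auto simp: trunc_def)
qed

lemma trunc_Suc: "trunc (Suc N) x = (\<lambda>a. trunc N x a + x N * dl N a)"
  by (auto simp: trunc_def dl_def fun_eq_iff less_Suc_eq)

lemma l2_scale: "l2 x \<Longrightarrow> l2 (\<lambda>a. c * x a)"
  unfolding l2_def by (simp add: norm_mult power_mult_distrib summable_on_cmult_right)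

context
  fixes E :: "mat \<Rightarrow> mat"
  assumes det: "deterministic_u1_operation E"
begin

lemma E_zero: "E (\<lambda>i j. 0) = (\<lambda>i j. 0)"
proof -
  have tc: "trace_class (\<lambda>i j. 0)" using rk1_tc[OF l2_zero l2_zero] by (simp add: rk1_def)
  have "E (\<lambda>i j. 0 * (0::complex)) = (\<lambda>i j. 0 * E (\<lambda>i j. 0) i j)" by (rule E_scale[OF det tc])
  then show ?thesis by simp
qed

lemma exp_left:
  assumes "l2 z"
  shows "E (rk1 (trunc N x) z) i j = (\<Sum>a<N. x a * E (rk1 (dl a) z) i j)"
proof (induction N)
  case 0
  have "rk1 (trunc 0 x) z = (\<lambda>i j. 0)" by (simp add: rk1_def trunc_def fun_eq_iff)
  then show ?case by (simp add: E_zero)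
next
  case (Suc N)
  have "rk1 (trunc (Suc N) x) z = (\<lambda>i j. rk1 (trunc N x) z i j + rk1 (\<lambda>a. x N * dl N a) z i j)"
    by (simp add: trunc_Suc rk1_def fun_eq_iff distrib_right)
  then have "E (rk1 (trunc (Suc N) x) z) i j = E (rk1 (trunc N x) z) i j + E (rk1 (\<lambda>a. x N * dl N a) z) i j"
    by (simp add: E_add[OF det] rk1_tc l2_trunc_any l2_scale l2_dl assms)
  also have "rk1 (\<lambda>a. x N * dl N a) z = (\<lambda>i j. x N * rk1 (dl N) z i j)" by (simp add: rk1_def fun_eq_iff)
  also have "E \<dots> = (\<lambda>i j. x N * E (rk1 (dl N) z) i j)" by (rule E_scale[OF det rk1_tc[OF l2_dl assms]])
  finally show ?case using Suc by simp
qed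

lemma exp_right:
  assumes "l2 w"
  shows "E (rk1 w (trunc N y)) i j = (\<Sum>b<N. cnj (y b) * E (rk1 w (dl b)) i j)"
proof (induction N)
  case 0
  have "rk1 w (trunc 0 y) = (\<lambda>i j. 0)" by (simp add: rk1_def trunc_def fun_eq_iff)
  then show ?case by (simp add: E_zero)
next
  case (Suc N)
  have "rk1 w (trunc (Suc N) y) = (\<lambda>i j. rk1 w (trunc N y) i j + rk1 w (\<lambda>a. y N * dl N a) i j)"
    by (simp add: trunc_Suc rk1_def fun_eq_iff distrib_left)
  then have "E (rk1 w (trunc (Suc N) y)) i j = E (rk1 w (trunc N y)) i j + E (rk1 w (\<lambda>a. y N * dl N a)) i j"
    by (simp add: E_add[OF det] rk1_tc l2_trunc_any l2_scale l2_dl assms)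
  also have "rk1 w (\<lambda>a. y N * dl N a) = (\<lambda>i j. cnj (y N) * rk1 w (dl N) i j)" by (simp add: rk1_def fun_eq_iff)
  also have "E \<dots> = (\<lambda>i j. cnj (y N) * E (rk1 w (dl N)) i j)" by (rule E_scale[OF det rk1_tc[OF assms l2_dl]])
  finally show ?case using Suc by simp
qed

lemma F_supp:
  assumes "E (rk1 (dl a) (dl b)) i j \<noteq> 0"
  shows "int i + int b = int j + int a"
proof (rule ccontr)
  assume ne: "int i + int b \<noteq> int j + int a"
  define d where "d = (real a - real b) - (real i - real j)"
  have d0: "d \<noteq> 0" using ne unfolding d_def by linarith
  define \<theta> where "\<theta> = pi / d"
  have tc: "trace_class (rk1 (dl a) (dl b))" by (rule rk1_tc[OF l2_dl l2_dl])
  have "E (rot \<theta> (rk1 (dl a) (dl b))) = rot \<theta> (E (rk1 (dl a) (dl b)))" by (rule E_rot[OF det tc])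
  then have "cis (\<theta> * real a - \<theta> * real b) * E (rk1 (dl a) (dl b)) i j
     = cis (\<theta> * real i) * E (rk1 (dl a) (dl b)) i j * cnj (cis (\<theta> * real j))"
    unfolding rot_rk1_dl E_scale[OF det tc] by (simp add: rot_def fun_eq_iff)
  then have "cis (\<theta> * real a - \<theta> * real b) = cis (\<theta> * real i - \<theta> * real j)"
    using assms by (simp add: cis_cnj cis_mult)
  then have "cis (\<theta> * real a - \<theta> * real b) / cis (\<theta> * real i - \<theta> * real j) = 1" by simp
  then have "cis (\<theta> * d) = 1" unfolding cis_divide d_def by (simp add: algebra_simps)
  moreover have "\<theta> * d = pi" unfolding \<theta>_def using d0 by simp
  ultimately show False by simp
qed

end


lemma sum_int_delta:
  "(\<Sum>a<N. if int a = c then g a else 0) = (if 0 \<le> c \<and> nat c < N then g (nat c) else 0)"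
proof -
  have "(\<Sum>a<N. if int a = c then g a else 0) = (\<Sum>a<N. if a = nat c \<and> 0 \<le> c then g (nat c) else 0)"
    by (rule sum.cong) auto
  also have "\<dots> = (if 0 \<le> c \<and> nat c < N then g (nat c) else 0)"
    by (cases "0 \<le> c") (auto simp: sum.delta)
  finally show ?thesis .
qed

context
  fixes E :: "mat \<Rightarrow> mat"
  assumes det: "deterministic_u1_operation E"
begin

lemma G_formula:
  fixes n i j :: nat
  assumes x: "l2 x"
  defines "c \<equiv> int n + int i - int j"
  shows "E (rk1 x (dl n)) i j = (if 0 \<le> c then x (nat c) * E (rk1 (dl (nat c)) (dl n)) i j else 0)"
    (is "_ = ?R")
proof -
  have fin: "E (rk1 (trunc N x) (dl n)) i j = ?R" if "N \<ge> n + i + 1" for N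
  proof -
    have "E (rk1 (trunc N x) (dl n)) i j = (\<Sum>a<N. x a * E (rk1 (dl a) (dl n)) i j)"
      by (rule exp_left[OF det l2_dl])
    also have "\<dots> = (\<Sum>a<N. if int a = c then x a * E (rk1 (dl a) (dl n)) i j else 0)"
    proof (rule sum.cong[OF refl])
      fix a assume "a \<in> {..<N}"
      show "x a * E (rk1 (dl a) (dl n)) i j = (if int a = c then x a * E (rk1 (dl a) (dl n)) i j else 0)"
        using F_supp[OF det, of a n i j] by (auto simp: c_def)
    qed
    also have "\<dots> = ?R" using that unfolding sum_int_delta c_def by auto
    finally show ?thesis .
  qed
  have err: "(cmod (E (rk1 x (dl n)) i j - ?R))^2 \<le> nrm (tail N x)" if "N \<ge> n + i + 1" for N
  proof -
    have "E (rk1 x (dl n)) i j = E (rk1 (trunc N x) (dl n)) i j + E (rk1 (tail N x) (dl n)) i j"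
      by (subst rk1_split1[of _ _ N]) (simp add: E_add[OF det] rk1_tc l2_trunc l2_tail l2_dl x)
    then have "E (rk1 x (dl n)) i j - ?R = E (rk1 (tail N x) (dl n)) i j" using fin[OF that] by simp
    then show ?thesis using E_bound[OF det l2_tail[OF x] l2_dl, of N n i j] by (simp add: nrm_dl)
  qed
  have "(cmod (E (rk1 x (dl n)) i j - ?R))^2 \<le> 0"
    by (rule LIMSEQ_le_const[OF nrm_tail_lim[OF x]]) (use err in blast)
  then show ?thesis by simp
qed

lemma diag_sums:
  assumes x: "l2 x"
  shows "((\<lambda>a. (cmod (x a))^2 * Re (E (rk1 (dl a) (dl a)) m m)) has_sum Re (E (rk1 x x) m m)) UNIV"
proof -
  define L where "L = E (rk1 x x) m m"
  define S where "S = (\<lambda>N. \<Sum>a<N. x a * cnj (x a) * E (rk1 (dl a) (dl a)) m m)"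
  have Sform: "E (rk1 (trunc N x) (trunc N x)) m m = S N" for N
  proof -
    have "E (rk1 (trunc N x) (trunc N x)) m m = (\<Sum>a<N. x a * E (rk1 (dl a) (trunc N x)) m m)"
      by (rule exp_left[OF det l2_trunc_any])
    also have "\<dots> = (\<Sum>a<N. x a * (\<Sum>b<N. cnj (x b) * E (rk1 (dl a) (dl b)) m m))"
      by (simp only: exp_right[OF det l2_dl])
    also have "\<dots> = (\<Sum>a<N. x a * (\<Sum>b<N. if int b = int a then cnj (x b) * E (rk1 (dl a) (dl b)) m m else 0))"
    proof (intro sum.cong refl arg_cong2[where f="(*)"])
      fix a b assume "b \<in> {..<N}"
      then show "cnj (x b) * E (rk1 (dl a) (dl b)) m m = (if int b = int a then cnj (x b) * E (rk1 (dl a) (dl b)) m m else 0)"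
        using F_supp[OF det, of a b m m] by auto
    qed
    also have "\<dots> = S N" unfolding sum_int_delta S_def by (auto intro!: sum.cong simp: mult.assoc)
    finally show ?thesis .
  qed
  have bnd: "cmod (S N - L) \<le> 2 * sqrt (nrm x * nrm (tail N x))" for N
  proof -
    have tc: "l2 (trunc N x)" "l2 (tail N x)" using x by (auto simp: l2_trunc l2_tail)
    have "L = E (rk1 (trunc N x) x) m m + E (rk1 (tail N x) x) m m"
      unfolding L_def by (subst rk1_split1[of _ _ N]) (simp add: E_add[OF det] rk1_tc tc x)
    also have "E (rk1 (trunc N x) x) m m = E (rk1 (trunc N x) (trunc N x)) m m + E (rk1 (trunc N x) (tail N x)) m m"
      by (subst rk1_split2[of _ _ N]) (simp add: E_add[OF det] rk1_tc tc x)
    finally have eq: "S N - L = - (E (rk1 (trunc N x) (tail N x)) m m + E (rk1 (tail N x) x) m m)"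
      using Sform[of N] by simp
    have "cmod (S N - L) = cmod (E (rk1 (trunc N x) (tail N x)) m m + E (rk1 (tail N x) x) m m)"
      by (simp only: eq norm_minus_cancel)
    also have "\<dots> \<le> cmod (E (rk1 (trunc N x) (tail N x)) m m) + cmod (E (rk1 (tail N x) x) m m)"
      by (rule norm_triangle_ineq)
    also have "\<dots> \<le> sqrt (nrm (trunc N x) * nrm (tail N x)) + sqrt (nrm (tail N x) * nrm x)"
      by (rule add_mono; rule E_bound'[OF det]) (use tc x in auto)
    also have "\<dots> \<le> sqrt (nrm x * nrm (tail N x)) + sqrt (nrm x * nrm (tail N x))"
    proof -
      have "nrm (trunc N x) * nrm (tail N x) \<le> nrm x * nrm (tail N x)"
        using nrm_trunc_le[OF x, of N] nrm_nonneg[of "tail N x"] by (rule mult_right_mono)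
      then show ?thesis by (simp add: mult.commute[of "nrm (tail N x)"])
    qed
    finally show ?thesis by simp
  qed
  have lim: "(\<lambda>N. 2 * sqrt (nrm x * nrm (tail N x))) \<longlonglongrightarrow> 2 * sqrt (nrm x * 0)"
    by (intro tendsto_intros nrm_tail_lim[OF x])
  have "(\<lambda>N. S N - L) \<longlonglongrightarrow> 0"
  proof (rule Lim_null_comparison[OF always_eventually])
    show "\<forall>N. norm (S N - L) \<le> 2 * sqrt (nrm x * nrm (tail N x))" using bnd by simp
    show "(\<lambda>N. 2 * sqrt (nrm x * nrm (tail N x))) \<longlonglongrightarrow> 0" using lim by simp
  qed
  then have "S \<longlonglongrightarrow> L" by (rule LIM_zero_cancel)
  then have "(\<lambda>N. Re (S N)) \<longlonglongrightarrow> Re L" by (rule tendsto_Re)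
  moreover have "Re (S N) = (\<Sum>a<N. (cmod (x a))^2 * Re (E (rk1 (dl a) (dl a)) m m))" for N
    unfolding S_def Re_sum cmod_power2 by (intro sum.cong refl) (simp add: algebra_simps power2_eq_square)
  ultimately have "(\<lambda>a. (cmod (x a))^2 * Re (E (rk1 (dl a) (dl a)) m m)) sums Re L"
    by (simp add: sums_def)
  then show ?thesis unfolding L_def
    by (rule sums_nonneg_imp_has_sum) (use E_diag(2)[OF det l2_dl] in simp)
qed

end


lemma arith_key:
  fixes Q0 Qj P P' Tj T0 f g :: real
  assumes nn: "0 \<le> Q0" "0 \<le> Qj" "0 \<le> P" "0 \<le> P'" "0 \<le> Tj" "0 \<le> T0"
  assumes e1: "(Q0 * P * Tj)^2 \<le> Qj^2 * P'^2 * (T0 * Tj)"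
  assumes e2: "(Qj * P' * T0)^2 \<le> Q0^2 * P^2 * (Tj * T0)"
  shows "Q0^2 * P^2 * Tj = Qj^2 * P'^2 * T0"
proof -
  define A where "A = Q0^2 * P^2 * Tj"
  define B where "B = Qj^2 * P'^2 * T0"
  have A0: "0 \<le> A" "0 \<le> B" unfolding A_def B_def using nn by auto
  have 1: "A * Tj \<le> B * Tj" using e1 unfolding A_def B_def by (simp add: power2_eq_square algebra_simps)
  have 2: "B * T0 \<le> A * T0" using e2 unfolding A_def B_def by (simp add: power2_eq_square algebra_simps)
  have "A \<le> B"
  proof (cases "Tj = 0")
    case True then show ?thesis using A0 unfolding A_def by simp
  next
    case False then show ?thesis using 1 nn(5) by (simp add: mult_le_cancel_right)
  qed
  moreover have "B \<le> A"
  proof (cases "T0 = 0")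
    case True then show ?thesis using A0 unfolding B_def by simp
  next
    case False then show ?thesis using 2 nn(6) by (simp add: mult_le_cancel_right)
  qed
  ultimately show ?thesis unfolding A_def B_def by simp
qed

context
  fixes E :: "mat \<Rightarrow> mat"
  assumes det: "deterministic_u1_operation E"
begin

lemma T_sum: "((\<lambda>m. Re (E (rk1 (dl n) (dl n)) m m)) has_sum 1) UNIV"
proof -
  have tc: "trace_class (rk1 (dl n) (dl n))" by (rule rk1_tc[OF l2_dl l2_dl])
  have "mtrace (rk1 (dl n) (dl n)) = (\<Sum>\<^sub>\<infinity>i. if i = n then 1 else 0)"
    unfolding mtrace_def rk1_def dl_def by (intro infsum_cong) auto
  also have "\<dots> = 1" using infsum_single_nat[of n "\<lambda>_. 1::complex"] by simp
  finally have tr: "(\<Sum>\<^sub>\<infinity>m. E (rk1 (dl n) (dl n)) m m) = 1" using E_tr[OF det tc] unfolding mtrace_def by simp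
  then have "(\<lambda>m. E (rk1 (dl n) (dl n)) m m) summable_on UNIV" using infsum_not_exists by force
  then have "((\<lambda>m. E (rk1 (dl n) (dl n)) m m) has_sum 1) UNIV" using tr by (metis has_sum_infsum)
  from has_sum_Re[OF this] show ?thesis by simp
qed

end


lemma l2_sqrt:
  assumes "\<And>n. 0 \<le> p n" "(p has_sum 1) UNIV"
  shows "l2 (\<lambda>i. complex_of_real (sqrt (p i)))" "nrm (\<lambda>i. complex_of_real (sqrt (p i))) = 1"
proof -
  have e: "(\<lambda>i. (cmod (complex_of_real (sqrt (p i))))^2) = p" using assms(1) by (auto simp: fun_eq_iff)
  show "l2 (\<lambda>i. complex_of_real (sqrt (p i)))" unfolding l2_def e using assms(2) by (rule has_sum_imp_summable)
  show "nrm (\<lambda>i. complex_of_real (sqrt (p i))) = 1" unfolding nrm_def e using assms(2) by (rule infsumI)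
qed

lemma rk1_sqrt: "rk1 (\<lambda>i. complex_of_real (sqrt (p i))) (\<lambda>i. complex_of_real (sqrt (p i))) = sqrt_state_proj p"
  by (simp add: rk1_def sqrt_state_proj_def fun_eq_iff)

lemma range_minus1: "k \<notin> range (\<lambda>j::nat. int m - int j) \<Longrightarrow> int m - k < 0"
proof (rule ccontr)
  assume a: "k \<notin> range (\<lambda>j::nat. int m - int j)" "\<not> int m - k < 0"
  then have "k = int m - int (nat (int m - k))" by auto
  then have "k \<in> range (\<lambda>j::nat. int m - int j)" by blast
  with a show False by blast
qed

lemma range_minus2: "k \<notin> range (\<lambda>a::nat. int a - int m0) \<Longrightarrow> int m0 + k < 0"
proof (rule ccontr)
  assume a: "k \<notin> range (\<lambda>a::nat. int a - int m0)" "\<not> int m0 + k < 0"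
  then have "k = int (nat (int m0 + k)) - int m0" by auto
  then have "k \<in> range (\<lambda>a::nat. int a - int m0)" by blast
  with a show False by blast
qed

theorem forward:
  fixes p q :: "nat \<Rightarrow> real"
  assumes p0: "\<And>n. 0 \<le> p n" and q0: "\<And>n. 0 \<le> q n"
    and ps: "(p has_sum 1) UNIV" and qs: "(q has_sum 1) UNIV"
    and det: "deterministic_u1_operation E" and EE: "E (sqrt_state_proj p) = sqrt_state_proj q"
  shows "\<exists>w :: int \<Rightarrow> real. (\<forall>k. 0 \<le> w k \<and> w k \<le> 1) \<and> (w has_sum 1) UNIV \<and>
           (\<forall>m. ((\<lambda>k. w k * shift_vec k q m) has_sum p m) UNIV)"
proof -
  define \<psi> where "\<psi> = (\<lambda>i. complex_of_real (sqrt (p i)))"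
  have l\<psi>: "l2 \<psi>" using l2_sqrt[OF p0 ps] unfolding \<psi>_def by simp
  define Fm where "Fm = (\<lambda>a b. E (rk1 (dl a) (dl b)))"
  define T where "T = (\<lambda>j n. Re (Fm n n j j))"
  have T0: "0 \<le> T j n" for j n unfolding T_def Fm_def using E_diag(2)[OF det l2_dl] by simp
  have FT: "Fm n n j j = complex_of_real (T j n)" for j n
    unfolding T_def Fm_def using E_diag(1)[OF det l2_dl, of n j] by (simp add: complex_eq_iff)
  define G where "G = (\<lambda>n. E (rk1 \<psi> (dl n)))"
  have Gf: "G n i j = (if 0 \<le> int n + int i - int j then complex_of_real (sqrt (p (nat (int n + int i - int j))))
      * Fm (nat (int n + int i - int j)) n i j else 0)" for n i j
    unfolding G_def Fm_def using G_formula[OF det l\<psi>, of n i j] by (simp add: \<psi>_def)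
  have Y00: "E (rk1 \<psi> \<psi>) = (\<lambda>i j. complex_of_real (sqrt (q i)) * complex_of_real (sqrt (q j)))"
    unfolding \<psi>_def rk1_sqrt EE by (simp add: sqrt_state_proj_def fun_eq_iff)
  have R1: "complex_of_real (sqrt (q i0)) * G n i j = complex_of_real (sqrt (q i)) * G n i0 j" for n i0 i j
  proof -
    have "block_pos 2 (\<lambda>a b. E (rk1 (if a = 0 then \<psi> else dl n) (if b = 0 then \<psi> else dl n)))"
      by (rule E_rk1_2[OF det l\<psi> l2_dl])
    from rank1_col[OF this, of "\<lambda>i. sqrt (q i)" i0 i j] show ?thesis unfolding G_def using Y00 by simp
  qed
  have B2: "(cmod (Fm a b i j))^2 \<le> T i a * T j b" for a b i j
  proof -
    have "block_pos 2 (\<lambda>x y. E (rk1 (if x = 0 then dl a else dl b) (if y = 0 then dl a else dl b)))"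
      by (rule E_rk1_2[OF det l2_dl l2_dl])
    from block2_facts(6)[OF this, of i j] show ?thesis unfolding Fm_def T_def by simp
  qed
  have "\<exists>m. q m > 0"
  proof (rule ccontr)
    assume "\<not> (\<exists>m. q m > 0)"
    then have "q = (\<lambda>_. 0)" using q0 by (auto simp: fun_eq_iff not_less intro: antisym)
    then have "(q has_sum 0) UNIV" by simp
    then show False using has_sum_unique[OF qs] by fastforce
  qed
  define m0 where "m0 = (LEAST m. q m > 0)"
  have qm0: "q m0 > 0" unfolding m0_def using \<open>\<exists>m. q m > 0\<close> by (rule LeastI_ex)
  define w where "w = (\<lambda>k::int. if 0 \<le> int m0 + k then p (nat (int m0 + k)) * T m0 (nat (int m0 + k)) / q m0 else 0)"
  have w0: "0 \<le> w k" for k unfolding w_def using p0 T0 qm0 by auto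
  have sq: "sqrt x * sqrt x = x" if "0 \<le> x" for x :: real using that by simp
  have key: "p n * T j n = w (int n - int j) * q j" for n j
  proof (cases "0 \<le> int m0 + (int n - int j)")
    case False
    have "complex_of_real (sqrt (q m0)) * G n j j = complex_of_real (sqrt (q j)) * G n m0 j" by (rule R1)
    moreover have "G n j j = complex_of_real (sqrt (p n)) * complex_of_real (T j n)" using Gf[of n j j] FT by simp
    moreover have "G n m0 j = 0" using Gf[of n m0 j] False by simp
    ultimately have "sqrt (q m0) * (sqrt (p n) * T j n) = 0" 
      by (metis mult_eq_0_iff of_real_eq_0_iff of_real_mult)
    then have "sqrt (p n) * T j n = 0" using qm0 by simp
    then have "p n * T j n = 0" using sq[OF p0[of n]] by (metis mult.assoc mult_zero_right)
    then show ?thesis using False unfolding w_def by simp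
  next
    case True
    define n' where "n' = nat (int m0 + (int n - int j))"
    have n'i: "int n' = int m0 + int n - int j" unfolding n'_def using True by simp
    define f where "f = Fm n' n m0 j"
    define g where "g = Fm n n' j m0"
    have e1: "complex_of_real (sqrt (q m0)) * (complex_of_real (sqrt (p n)) * complex_of_real (T j n))
       = complex_of_real (sqrt (q j)) * (complex_of_real (sqrt (p n')) * f)"
    proof -
      have "G n j j = complex_of_real (sqrt (p n)) * complex_of_real (T j n)" using Gf[of n j j] FT by simp
      moreover have "G n m0 j = complex_of_real (sqrt (p n')) * f"
        using Gf[of n m0 j] True unfolding f_def n'_def by (simp add: algebra_simps)
      ultimately show ?thesis using R1[of m0 n j j] by simp
    qed
    have e2: "complex_of_real (sqrt (q j)) * (complex_of_real (sqrt (p n')) * complex_of_real (T m0 n'))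
       = complex_of_real (sqrt (q m0)) * (complex_of_real (sqrt (p n)) * g)"
    proof -
      have "G n' m0 m0 = complex_of_real (sqrt (p n')) * complex_of_real (T m0 n')" using Gf[of n' m0 m0] FT by simp
      moreover have "nat (int n' + int j - int m0) = n" using n'i by simp
      moreover have "G n' j m0 = complex_of_real (sqrt (p (nat (int n' + int j - int m0)))) * g"
        using Gf[of n' j m0] n'i unfolding g_def by simp
      ultimately show ?thesis using R1[of j n' m0 m0] by simp
    qed
    have c1: "sqrt (q m0) * sqrt (p n) * T j n = sqrt (q j) * sqrt (p n') * cmod f"
    proof -
      have "cmod (complex_of_real (sqrt (q m0)) * (complex_of_real (sqrt (p n)) * complex_of_real (T j n)))
          = sqrt (q m0) * sqrt (p n) * T j n" using p0 q0 T0 by (simp add: norm_mult)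
      moreover have "cmod (complex_of_real (sqrt (q j)) * (complex_of_real (sqrt (p n')) * f))
          = sqrt (q j) * sqrt (p n') * cmod f" using p0 q0 by (simp add: norm_mult)
      ultimately show ?thesis using e1 by metis
    qed
    have c2: "sqrt (q j) * sqrt (p n') * T m0 n' = sqrt (q m0) * sqrt (p n) * cmod g"
    proof -
      have "cmod (complex_of_real (sqrt (q j)) * (complex_of_real (sqrt (p n')) * complex_of_real (T m0 n')))
          = sqrt (q j) * sqrt (p n') * T m0 n'" using p0 q0 T0 by (simp add: norm_mult)
      moreover have "cmod (complex_of_real (sqrt (q m0)) * (complex_of_real (sqrt (p n)) * g))
          = sqrt (q m0) * sqrt (p n) * cmod g" using p0 q0 by (simp add: norm_mult)
      ultimately show ?thesis using e2 by metis
    qed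
    have "(sqrt (q m0) * sqrt (p n) * T j n)^2 \<le> (sqrt (q j))^2 * (sqrt (p n'))^2 * (T m0 n' * T j n)"
    proof -
      have "(sqrt (q m0) * sqrt (p n) * T j n)^2 = (sqrt (q j))^2 * (sqrt (p n'))^2 * (cmod f)^2"
        unfolding c1 by (simp add: power_mult_distrib)
      also have "\<dots> \<le> (sqrt (q j))^2 * (sqrt (p n'))^2 * (T m0 n' * T j n)"
        using B2[of n' n m0 j] unfolding f_def by (intro mult_left_mono) auto
      finally show ?thesis .
    qed
    moreover have "(sqrt (q j) * sqrt (p n') * T m0 n')^2 \<le> (sqrt (q m0))^2 * (sqrt (p n))^2 * (T j n * T m0 n')"
    proof -
      have "(sqrt (q j) * sqrt (p n') * T m0 n')^2 = (sqrt (q m0))^2 * (sqrt (p n))^2 * (cmod g)^2"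
        unfolding c2 by (simp add: power_mult_distrib)
      also have "\<dots> \<le> (sqrt (q m0))^2 * (sqrt (p n))^2 * (T j n * T m0 n')"
        using B2[of n n' j m0] unfolding g_def by (intro mult_left_mono) auto
      finally show ?thesis .
    qed
    ultimately have "(sqrt (q m0))^2 * (sqrt (p n))^2 * T j n = (sqrt (q j))^2 * (sqrt (p n'))^2 * T m0 n'"
      by (intro arith_key) (use p0 q0 T0 in auto)
    then have "q m0 * p n * T j n = q j * p n' * T m0 n'" using p0 q0 by simp
    then show ?thesis unfolding w_def using True qm0 unfolding n'_def[symmetric]
      by (simp add: field_simps)
  qed
  have pm: "((\<lambda>k. w k * shift_vec k q m) has_sum p m) UNIV" for m
  proof -
    have "((\<lambda>j. p m * T j m) has_sum p m * 1) UNIV"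
      by (rule has_sum_cmult_right) (use T_sum[OF det, of m] in \<open>simp add: T_def Fm_def\<close>)
    then have h: "((\<lambda>j. w (int m - int j) * q j) has_sum p m) UNIV" using key by simp
    have inj: "inj (\<lambda>j::nat. int m - int j)" by (auto simp: inj_on_def)
    have "((\<lambda>k. w k * shift_vec k q m) has_sum p m) ((\<lambda>j::nat. int m - int j) ` UNIV)"
      by (subst has_sum_reindex[OF inj]) (use h in \<open>simp add: o_def shift_vec_def\<close>)
    then show ?thesis
      by (rule has_sum_cong_neutral[THEN iffD1, rotated -1]) (auto simp: shift_vec_def dest: range_minus1)
  qed
  have ws: "(w has_sum 1) UNIV"
  proof -
    have "((\<lambda>a. (cmod (\<psi> a))^2 * Re (E (rk1 (dl a) (dl a)) m0 m0)) has_sum Re (E (rk1 \<psi> \<psi>) m0 m0)) UNIV"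
      by (rule diag_sums[OF det l\<psi>])
    moreover have "Re (E (rk1 \<psi> \<psi>) m0 m0) = q m0" using Y00 q0 by simp
    moreover have "(cmod (\<psi> a))^2 = p a" for a unfolding \<psi>_def using p0 by simp
    ultimately have "((\<lambda>a. p a * T m0 a) has_sum q m0) UNIV" unfolding T_def Fm_def by simp
    from has_sum_cmult_right[OF this, of "1 / q m0"]
    have h: "((\<lambda>a. p a * T m0 a / q m0) has_sum 1) UNIV" using qm0 by simp
    have inj: "inj (\<lambda>a::nat. int a - int m0)" by (auto simp: inj_on_def)
    have "(w has_sum 1) ((\<lambda>a::nat. int a - int m0) ` UNIV)"
      by (subst has_sum_reindex[OF inj]) (use h in \<open>simp add: o_def w_def\<close>)
    then show ?thesis
      by (rule has_sum_cong_neutral[THEN iffD1, rotated -1]) (auto simp: w_def dest: range_minus2)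
  qed
  have w1: "w k \<le> 1" for k
  proof -
    have "sum w {k} \<le> 1" by (rule finite_sum_le_has_sum[OF ws]) (use w0 in auto)
    then show ?thesis by simp
  qed
  show ?thesis using w0 w1 ws pm by blast
qed



lemma has_sum_sum_fin:
  fixes f :: "'a \<Rightarrow> 'b \<Rightarrow> 'c::topological_comm_monoid_add"
  assumes "finite A" "\<And>a. a \<in> A \<Longrightarrow> (f a has_sum s a) U"
  shows "((\<lambda>k. \<Sum>a\<in>A. f a k) has_sum (\<Sum>a\<in>A. s a)) U"
  using assms by (induction A rule: finite_induct) (auto intro: has_sum_add)

definition ix :: "nat \<Rightarrow> int \<Rightarrow> nat" where "ix i k = nat (int i + k)"

locale bwd =
  fixes p q :: "nat \<Rightarrow> real" and w :: "int \<Rightarrow> real"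
  assumes p0: "\<And>n. 0 \<le> p n" and q0: "\<And>n. 0 \<le> q n"
    and ps: "(p has_sum 1) UNIV" and qs: "(q has_sum 1) UNIV"
    and w0: "\<And>k. 0 \<le> w k" and ws: "(w has_sum 1) UNIV"
    and pw: "\<And>m. ((\<lambda>k. w k * shift_vec k q m) has_sum p m) UNIV"

context bwd
begin

definition cK :: "int \<Rightarrow> nat \<Rightarrow> real" where
  "cK k n = (if p n > 0 then sqrt (w k * shift_vec k q n / p n) else (if k = 0 then 1 else 0))"

definition cc :: "int \<Rightarrow> nat \<Rightarrow> real" where
  "cc k i = (if 0 \<le> int i + k then cK k (ix i k) else 0)"

lemma sh0: "0 \<le> shift_vec k q n" using q0 by (simp add: shift_vec_def)

lemma cK_nonneg: "0 \<le> cK k n" unfolding cK_def using w0[of k] sh0[of k n] by (auto intro!: divide_nonneg_pos mult_nonneg_nonneg)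

lemma cc_nonneg: "0 \<le> cc k i" unfolding cc_def by (auto simp: cK_nonneg)

lemma cK_sq_sum: "((\<lambda>k. (cK k n)^2) has_sum 1) UNIV"
proof (cases "p n > 0")
  case True
  have "((\<lambda>k. (1 / p n) * (w k * shift_vec k q n)) has_sum (1 / p n) * p n) UNIV"
    by (rule has_sum_cmult_right[OF pw])
  moreover have "(cK k n)^2 = (1 / p n) * (w k * shift_vec k q n)" for k
    unfolding cK_def using True w0[of k] sh0[of k n] by simp
  ultimately show ?thesis using True by simp
next
  case False
  have "((\<lambda>k. (cK k n)^2) has_sum 1) {0}" unfolding cK_def using False by (intro has_sum_finiteI) simp_all
  then show ?thesis by (rule has_sum_cong_neutral[THEN iffD1, rotated -1]) (auto simp: cK_def False)
qed

lemma cK_le1: "cK k n \<le> 1"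
proof -
  have "sum (\<lambda>k. (cK k n)^2) {k} \<le> 1" by (rule finite_sum_le_has_sum[OF cK_sq_sum]) auto
  then have "(cK k n)^2 \<le> 1^2" by simp
  then show ?thesis by (rule power2_le_imp_le) simp
qed

lemma cc_le1: "cc k i \<le> 1" unfolding cc_def by (auto simp: cK_le1)

lemma cK_zero: "int n < k \<Longrightarrow> cK k n = 0"
  unfolding cK_def shift_vec_def by auto

lemma wsh_zero: "p n = 0 \<Longrightarrow> w k * shift_vec k q n = 0"
  by (rule nonneg_has_sum_le_0D[OF pw[of n]]) (auto intro: mult_nonneg_nonneg w0 sh0)

lemma cK_sqrt: "cK k n * sqrt (p n) = sqrt (w k) * sqrt (shift_vec k q n)"
proof (cases "p n > 0")
  case True
  then show ?thesis unfolding cK_def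
    by (simp add: real_sqrt_mult real_sqrt_divide)
next
  case False
  then have "p n = 0" using p0[of n] by simp
  then have "w k * shift_vec k q n = 0" by (rule wsh_zero)
  then show ?thesis using \<open>p n = 0\<close> by (simp add: real_sqrt_mult[symmetric])
qed

lemma support_wq: "int m + k < 0 \<Longrightarrow> w k * q m = 0"
proof -
  assume neg: "int m + k < 0"
  define f where "f = (\<lambda>(n::nat, k::int). w k * shift_vec k q n)"
  have fsum: "f summable_on UNIV \<times> UNIV"
    unfolding f_def by (rule summable_on_SigmaI[where g = p])
      (use pw ps w0 sh0 in \<open>auto intro: has_sum_imp_summable\<close>)
  have f1: "(f has_sum 1) (UNIV \<times> UNIV)"
    by (rule has_sum_SigmaI[OF _ ps fsum]) (use pw in \<open>simp add: f_def\<close>)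
  define A where "A = {(n::nat, k::int). 0 \<le> int n - k}"
  define B where "B = {(k::int, m::nat). 0 \<le> int m + k}"
  have "(f has_sum 1) A"
    using f1 by (rule has_sum_cong_neutral[THEN iffD1, rotated -1]) (auto simp: A_def f_def shift_vec_def)
  moreover have "(f has_sum 1) A \<longleftrightarrow> ((\<lambda>(k,m). w k * q m) has_sum 1) B"
    by (rule has_sum_reindex_bij_witness[where j = "\<lambda>(n,k). (k, nat (int n - k))" and i = "\<lambda>(k,m). (nat (int m + k), k)"])
       (auto simp: A_def B_def f_def shift_vec_def)
  ultimately have g1: "((\<lambda>(k,m). w k * q m) has_sum 1) B" by simp
  have g2: "((\<lambda>(k,m). if 0 \<le> int m + k then w k * q m else 0) has_sum 1) UNIV"
    using g1 by (rule has_sum_cong_neutral[THEN iffD1, rotated -1]) (auto simp: B_def)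
  have qk: "((\<lambda>m. w k * q m) has_sum w k) UNIV" for k using has_sum_cmult_right[OF qs, of "w k"] by simp
  have hsum: "(\<lambda>(k::int, m::nat). w k * q m) summable_on UNIV \<times> UNIV"
    by (rule summable_on_SigmaI[where g = w]) 
       (use qk ws w0 q0 in \<open>auto intro: has_sum_imp_summable\<close>)
  have h1: "((\<lambda>(k::int, m::nat). w k * q m) has_sum 1) (UNIV \<times> UNIV)"
    by (rule has_sum_SigmaI[OF _ ws hsum]) (use qk in simp)
  have "((\<lambda>x. (case x of (k,m) \<Rightarrow> w k * q m) + (-1) * (case x of (k,m) \<Rightarrow> if 0 \<le> int m + k then w k * q m else 0)) has_sum 1 + (-1) * 1) UNIV"
    using h1 has_sum_cmult_right[OF g2, of "-1"] by (intro has_sum_add) auto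
  moreover have "(\<lambda>x. (case x of (k,m) \<Rightarrow> w k * q m) + (-1) * (case x of (k,m) \<Rightarrow> if 0 \<le> int m + k then w k * q m else 0))
     = (\<lambda>(k,m). if 0 \<le> int m + k then 0 else w k * q m)" by (auto simp: fun_eq_iff)
  ultimately have d: "((\<lambda>(k,m). if 0 \<le> int m + k then 0 else w k * q m) has_sum 0) UNIV" by simp
  have "(\<lambda>(k,m). if 0 \<le> int m + k then 0 else w k * q m) (k, m) = 0"
    by (rule nonneg_has_sum_le_0D[OF d]) (use w0 q0 in auto)
  then show ?thesis using neg by simp
qed

end


lemma two_mult_le: "2 * x * y \<le> x^2 + (y::real)^2"
proof -
  have "0 \<le> (x - y)^2" by simp
  then show ?thesis by (simp add: power2_diff)
qed

context bwd
begin

definition Eop :: "mat \<Rightarrow> mat" where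
  "Eop X = (\<lambda>i j. \<Sum>\<^sub>\<infinity>k. complex_of_real (cc k i * cc k j) * X (ix i k) (ix j k))"

lemma G_sum:
  assumes hs: "hilbert_schmidt B"
  shows "(\<lambda>((l::nat,a::nat),k::int). (cK k a)^2 * (cmod (B l a))^2) summable_on UNIV"
proof -
  define g where "g = (\<lambda>((l::nat,a::nat),k::int). (cK k a)^2 * (cmod (B l a))^2)"
  have "g summable_on Sigma UNIV (\<lambda>_. UNIV)"
  proof (rule summable_on_SigmaI[where g = "\<lambda>(l,a). (cmod (B l a))^2"])
    fix la :: "nat \<times> nat" 
    show "((\<lambda>k. g (la, k)) has_sum (case la of (l,a) \<Rightarrow> (cmod (B l a))^2)) UNIV"
      using has_sum_cmult_left[OF cK_sq_sum[of "snd la"], of "(cmod (B (fst la) (snd la)))^2"]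
      by (cases la) (simp add: g_def)
    show "(\<lambda>(l,a). (cmod (B l a))^2) summable_on UNIV" using hs unfolding hilbert_schmidt_def .
    fix k show "0 \<le> g (la, k)" by (cases la) (simp add: g_def)
  qed
  then show ?thesis unfolding g_def by simp
qed

lemma S3:
  assumes hs: "hilbert_schmidt B"
  shows "(\<lambda>(i,(k,l)). (cc k i)^2 * (cmod (B l (ix i k)))^2) summable_on UNIV"
proof -
  define g where "g = (\<lambda>((l::nat,a::nat),k::int). (cK k a)^2 * (cmod (B l a))^2)"
  have gs: "g summable_on UNIV" unfolding g_def by (rule G_sum[OF hs])
  define h where "h = (\<lambda>(i::nat,(k::int,l::nat)). ((l, ix i k), k))"
  define A where "A = {(i::nat,(k::int,l::nat)). 0 \<le> int i + k}"
  have inj: "inj_on h A"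
    unfolding inj_on_def h_def A_def ix_def by auto
  have "g summable_on h ` A" using gs by (rule summable_on_subset_banach) simp
  then have "(g \<circ> h) summable_on A" by (subst summable_on_reindex[OF inj, symmetric])
  then show ?thesis
    by (rule summable_on_cong_neutral[THEN iffD1, rotated -1]) 
       (auto simp: A_def g_def h_def cc_def)
qed

lemma S1:
  assumes hs: "hilbert_schmidt B"
  shows "(\<lambda>(k,l). (cc k i)^2 * (cmod (B l (ix i k)))^2) summable_on UNIV"
proof -
  have "(\<lambda>(i,kl). (case kl of (k,l) \<Rightarrow> (cc k i)^2 * (cmod (B l (ix i k)))^2)) summable_on Sigma UNIV (\<lambda>_. UNIV)"
    using S3[OF hs] by (simp add: case_prod_unfold)
  from summable_on_SigmaD1[OF this, of i] show ?thesis by (simp add: case_prod_unfold)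
qed

lemma core:
  fixes i j :: nat
  assumes hB: "hilbert_schmidt B" and hC: "hilbert_schmidt C" and X: "\<And>a b. X a b = (\<Sum>\<^sub>\<infinity>l. cnj (B l a) * C l b)"
  defines "H \<equiv> \<lambda>(k,l). complex_of_real (cc k i * cc k j) * (cnj (B l (ix i k)) * C l (ix j k))"
  shows "H summable_on UNIV"
    "(\<lambda>k. complex_of_real (cc k i * cc k j) * X (ix i k) (ix j k)) summable_on UNIV"
    "Eop X i j = infsum H UNIV"
proof -
  have bnd: "norm (H kl) \<le> (case kl of (k,l) \<Rightarrow> ((cc k i)^2 * (cmod (B l (ix i k)))^2 + (cc k j)^2 * (cmod (C l (ix j k)))^2) / 2)" for kl
  proof (cases kl)
    case (Pair k l)
    have "norm (H kl) = (cc k i * cmod (B l (ix i k))) * (cc k j * cmod (C l (ix j k)))"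
      unfolding H_def Pair using cc_nonneg[of k i] cc_nonneg[of k j] by (simp add: norm_mult abs_mult)
    also have "\<dots> \<le> ((cc k i * cmod (B l (ix i k)))^2 + (cc k j * cmod (C l (ix j k)))^2) / 2"
      using two_mult_le[of "cc k i * cmod (B l (ix i k))" "cc k j * cmod (C l (ix j k))"] by simp
    finally show ?thesis unfolding Pair by (simp add: power_mult_distrib)
  qed
  have gs: "(\<lambda>kl. case kl of (k,l) \<Rightarrow> ((cc k i)^2 * (cmod (B l (ix i k)))^2 + (cc k j)^2 * (cmod (C l (ix j k)))^2) / 2) summable_on UNIV"
  proof -
    have "(\<lambda>kl. (case kl of (k,l) \<Rightarrow> (cc k i)^2 * (cmod (B l (ix i k)))^2) + (case kl of (k,l) \<Rightarrow> (cc k j)^2 * (cmod (C l (ix j k)))^2)) summable_on UNIV"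
      by (intro summable_on_add S1 hB hC)
    then have "(\<lambda>kl. (1/2) * ((case kl of (k,l) \<Rightarrow> (cc k i)^2 * (cmod (B l (ix i k)))^2) + (case kl of (k,l) \<Rightarrow> (cc k j)^2 * (cmod (C l (ix j k)))^2))) summable_on UNIV"
      by (rule summable_on_cmult_right)
    then show ?thesis by (simp add: case_prod_unfold)
  qed
  have "(\<lambda>x. norm (H x)) summable_on UNIV"
    by (rule Infinite_Sum.abs_summable_on_comparison_test'[OF gs bnd])
  then show Hs: "H summable_on UNIV" by (rule abs_summable_summable)
  have Hs': "(\<lambda>(k,l). H (k,l)) summable_on Sigma UNIV (\<lambda>_. UNIV)" using Hs by simp
  have inner: "infsum (\<lambda>l. H (k,l)) UNIV = complex_of_real (cc k i * cc k j) * X (ix i k) (ix j k)" for k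
    unfolding H_def X by (simp add: infsum_cmult_right')
  show "(\<lambda>k. complex_of_real (cc k i * cc k j) * X (ix i k) (ix j k)) summable_on UNIV"
    using summable_on_Sigma_banach[OF Hs'] unfolding inner .
  show "Eop X i j = infsum H UNIV"
    using infsum_Sigma'_banach[OF Hs'] unfolding inner Eop_def by simp
qed

lemma Eop_tc:
  assumes "trace_class X"
  shows "trace_class (Eop X)"
proof -
  obtain B C where hB: "hilbert_schmidt B" and hC: "hilbert_schmidt C" and X: "\<And>a b. X a b = (\<Sum>\<^sub>\<infinity>l. cnj (B l a) * C l b)"
    using assms unfolding trace_class_def by blast
  define mk where "mk = (\<lambda>B r i. if r \<in> range (to_nat :: int \<times> nat \<Rightarrow> nat) then (case from_nat r :: int \<times> nat of (k,l) \<Rightarrow> complex_of_real (cc k i) * B l (ix i k)) else 0)"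
  have hs: "hilbert_schmidt (mk B)" if hB: "hilbert_schmidt B" for B
  proof -
    have s3: "(\<lambda>((k,l),i). (cc k i)^2 * (cmod (B l (ix i k)))^2) summable_on UNIV \<times> UNIV"
      using S3[OF hB] by (subst summable_on_swap) (simp add: case_prod_unfold)
    define \<phi> where "\<phi> = (\<lambda>(kl :: int \<times> nat, i::nat). (to_nat kl, i))"
    have inj: "inj \<phi>" unfolding \<phi>_def inj_on_def by auto
    have "((\<lambda>(r,i). (cmod (mk B r i))^2) \<circ> \<phi>) = (\<lambda>((k,l),i). (cc k i)^2 * (cmod (B l (ix i k)))^2)"
      by (auto simp: fun_eq_iff \<phi>_def mk_def norm_mult power_mult_distrib abs_of_nonneg cc_nonneg)
    then have "((\<lambda>(r,i). (cmod (mk B r i))^2) \<circ> \<phi>) summable_on UNIV" using s3 by simp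
    then have "(\<lambda>(r,i). (cmod (mk B r i))^2) summable_on range \<phi>" by (subst summable_on_reindex[OF inj])
    then show ?thesis unfolding hilbert_schmidt_def
      by (rule summable_on_cong_neutral[THEN iffD1, rotated -1])
        (auto simp: mk_def \<phi>_def image_iff)
  qed
  show ?thesis unfolding trace_class_def
  proof (intro exI conjI allI)
    show "hilbert_schmidt (mk B)" "hilbert_schmidt (mk C)" using hs hB hC by auto
    fix i j
    define H where "H = (\<lambda>(k,l). complex_of_real (cc k i * cc k j) * (cnj (B l (ix i k)) * C l (ix j k)))"
    have "(\<Sum>\<^sub>\<infinity>r. cnj (mk B r i) * mk C r j) = (\<Sum>\<^sub>\<infinity>r\<in>range (to_nat :: int \<times> nat \<Rightarrow> nat). cnj (mk B r i) * mk C r j)"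
      by (rule infsum_cong_neutral) (auto simp: mk_def)
    also have "\<dots> = (\<Sum>\<^sub>\<infinity>kl::int \<times> nat. cnj (mk B (to_nat kl) i) * mk C (to_nat kl) j)"
      by (subst infsum_reindex) (auto simp: o_def)
    also have "\<dots> = infsum H UNIV"
      by (rule infsum_cong) (auto simp: mk_def H_def)
    also have "\<dots> = Eop X i j" using core(3)[OF hB hC X, of i j] unfolding H_def by simp
    finally show "Eop X i j = (\<Sum>\<^sub>\<infinity>r. cnj (mk B r i) * mk C r j)" by simp
  qed
qed

end


lemma norm_cnj_mult_le: "norm (cnj b * c) \<le> ((cmod b)^2 + (cmod c)^2) / 2"
  using two_mult_le[of "cmod b" "cmod c"] by (simp add: norm_mult)

lemma TR:
  assumes hB: "hilbert_schmidt B" and hC: "hilbert_schmidt C" and X: "\<And>a b. X a b = (\<Sum>\<^sub>\<infinity>l. cnj (B l a) * C l b)"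
  shows "(\<lambda>(l,a). cnj (B l a) * C l a) summable_on UNIV" "mtrace X = (\<Sum>\<^sub>\<infinity>(l,a). cnj (B l a) * C l a)"
proof -
  have gs: "(\<lambda>(l,a). ((cmod (B l a))^2 + (cmod (C l a))^2) / 2) summable_on UNIV"
  proof -
    have "(\<lambda>x. (1/2) * ((case x of (l,a) \<Rightarrow> (cmod (B l a))^2) + (case x of (l,a) \<Rightarrow> (cmod (C l a))^2))) summable_on UNIV"
      using hB hC unfolding hilbert_schmidt_def by (intro summable_on_cmult_right summable_on_add)
    then show ?thesis by (simp add: case_prod_unfold)
  qed
  have "(\<lambda>x. norm (case x of (l,a) \<Rightarrow> cnj (B l a) * C l a)) summable_on UNIV"
    by (rule Infinite_Sum.abs_summable_on_comparison_test'[OF gs]) 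
       (subgoal_tac "\<And>l a. norm (cnj (B l a) * C l a) \<le> ((cmod (B l a))^2 + (cmod (C l a))^2) / 2",
        auto simp only: split: prod.splits, rule norm_cnj_mult_le)
  then show s: "(\<lambda>(l,a). cnj (B l a) * C l a) summable_on UNIV" by (rule abs_summable_summable)
  have s': "(\<lambda>(a,l). cnj (B l a) * C l a) summable_on UNIV \<times> UNIV"
    using s by (subst summable_on_swap) (simp add: case_prod_unfold)
  have "mtrace X = (\<Sum>\<^sub>\<infinity>a. \<Sum>\<^sub>\<infinity>l. cnj (B l a) * C l a)" unfolding mtrace_def X ..
  also have "\<dots> = (\<Sum>\<^sub>\<infinity>(a,l)\<in>UNIV \<times> UNIV. cnj (B l a) * C l a)"
    using infsum_Sigma'_banach[of "\<lambda>a l. cnj (B l a) * C l a" UNIV "\<lambda>_. UNIV"] s' by simp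
  also have "\<dots> = (\<Sum>\<^sub>\<infinity>(l,a). cnj (B l a) * C l a)"
  proof -
    have "((\<lambda>(l,a). cnj (B l a) * C l a) has_sum (\<Sum>\<^sub>\<infinity>(l,a). cnj (B l a) * C l a)) (UNIV \<times> UNIV)"
      using has_sum_infsum[OF s] by simp
    then have "((\<lambda>(a,l). cnj (B l a) * C l a) has_sum (\<Sum>\<^sub>\<infinity>(l,a). cnj (B l a) * C l a)) (UNIV \<times> UNIV)"
      by (subst (asm) has_sum_swap) (simp add: case_prod_unfold)
    then show ?thesis by (rule infsumI)
  qed
  finally show "mtrace X = (\<Sum>\<^sub>\<infinity>(l,a). cnj (B l a) * C l a)" .
qed


lemma notin_hA: "((l,a),k) \<notin> (\<lambda>(i::nat,(k::int,l::nat)). ((l, ix i k), k)) ` {(i,(k,l)). 0 \<le> int i + k} \<Longrightarrow> int a < k"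
proof (rule ccontr)
  assume a: "((l,a),k) \<notin> (\<lambda>(i::nat,(k::int,l::nat)). ((l, ix i k), k)) ` {(i,(k,l)). 0 \<le> int i + k}" "\<not> int a < k"
  have "((l,a),k) = (\<lambda>(i::nat,(k::int,l::nat)). ((l, ix i k), k)) (nat (int a - k), (k, l))"
    using a(2) by (simp add: ix_def)
  moreover have "(nat (int a - k), (k, l)) \<in> {(i,(k,l)). 0 \<le> int i + k}" using a(2) by simp
  ultimately show False using a(1) by blast
qed

context bwd
begin

lemma Eop_trace:
  assumes "trace_class X"
  shows "mtrace (Eop X) = mtrace X"
proof -
  obtain B C where hB: "hilbert_schmidt B" and hC: "hilbert_schmidt C" and X: "\<And>a b. X a b = (\<Sum>\<^sub>\<infinity>l. cnj (B l a) * C l b)"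
    using assms unfolding trace_class_def by blast
  define \<Phi> where "\<Phi> = (\<lambda>(i::nat,(k::int,l::nat)). complex_of_real (cc k i * cc k i) * (cnj (B l (ix i k)) * C l (ix i k)))"
  define \<Psi> where "\<Psi> = (\<lambda>((l::nat,a::nat),k::int). complex_of_real ((cK k a)^2) * (cnj (B l a) * C l a))"
  define h where "h = (\<lambda>(i::nat,(k::int,l::nat)). ((l, ix i k), k))"
  define A where "A = {(i::nat,(k::int,l::nat)). 0 \<le> int i + k}"
  have \<Phi>s: "\<Phi> summable_on UNIV"
  proof -
    have gs: "(\<lambda>x. (1/2) * ((case x of (i,(k,l)) \<Rightarrow> (cc k i)^2 * (cmod (B l (ix i k)))^2) + (case x of (i,(k,l)) \<Rightarrow> (cc k i)^2 * (cmod (C l (ix i k)))^2))) summable_on UNIV"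
      by (intro summable_on_cmult_right summable_on_add S3 hB hC)
    have "(\<lambda>x. norm (\<Phi> x)) summable_on UNIV"
    proof (rule Infinite_Sum.abs_summable_on_comparison_test'[OF gs])
      fix x :: "nat \<times> int \<times> nat" 
      obtain i k l where x: "x = (i,(k,l))" by (cases x) auto
      have "norm (\<Phi> x) = (cc k i)^2 * norm (cnj (B l (ix i k)) * C l (ix i k))"
        unfolding x \<Phi>_def by (simp add: norm_mult abs_mult power2_eq_square)
      also have "\<dots> \<le> (cc k i)^2 * (((cmod (B l (ix i k)))^2 + (cmod (C l (ix i k)))^2) / 2)"
        by (intro mult_left_mono norm_cnj_mult_le) simp
      finally show "norm (\<Phi> x) \<le> (1/2) * ((case x of (i,(k,l)) \<Rightarrow> (cc k i)^2 * (cmod (B l (ix i k)))^2) + (case x of (i,(k,l)) \<Rightarrow> (cc k i)^2 * (cmod (C l (ix i k)))^2))"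
        unfolding x by (simp add: algebra_simps)
    qed
    then show ?thesis by (rule abs_summable_summable)
  qed
  have \<Psi>s: "\<Psi> summable_on UNIV"
  proof -
    have gs: "(\<lambda>x. (1/2) * ((case x of ((l,a),k) \<Rightarrow> (cK k a)^2 * (cmod (B l a))^2) + (case x of ((l,a),k) \<Rightarrow> (cK k a)^2 * (cmod (C l a))^2))) summable_on UNIV"
      using G_sum[OF hB] G_sum[OF hC] by (intro summable_on_cmult_right summable_on_add) (simp_all add: case_prod_unfold)
    have "(\<lambda>x. norm (\<Psi> x)) summable_on UNIV"
    proof (rule Infinite_Sum.abs_summable_on_comparison_test'[OF gs])
      fix x :: "(nat \<times> nat) \<times> int" 
      obtain l a k where x: "x = ((l,a),k)" by (cases x) auto
      have "norm (\<Psi> x) = (cK k a)^2 * norm (cnj (B l a) * C l a)"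
        unfolding x \<Psi>_def by (simp add: norm_mult norm_power)
      also have "\<dots> \<le> (cK k a)^2 * (((cmod (B l a))^2 + (cmod (C l a))^2) / 2)"
        by (intro mult_left_mono norm_cnj_mult_le) simp
      finally show "norm (\<Psi> x) \<le> (1/2) * ((case x of ((l,a),k) \<Rightarrow> (cK k a)^2 * (cmod (B l a))^2) + (case x of ((l,a),k) \<Rightarrow> (cK k a)^2 * (cmod (C l a))^2))"
        unfolding x by (simp add: algebra_simps)
    qed
    then show ?thesis by (rule abs_summable_summable)
  qed
  have "mtrace (Eop X) = (\<Sum>\<^sub>\<infinity>i. \<Sum>\<^sub>\<infinity>kl. \<Phi> (i, kl))"
    unfolding mtrace_def core(3)[OF hB hC X] \<Phi>_def by (simp add: case_prod_unfold)
  also have "\<dots> = infsum \<Phi> UNIV"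
    using infsum_Sigma'_banach[of "\<lambda>i kl. \<Phi> (i, kl)" UNIV "\<lambda>_. UNIV"] \<Phi>s by simp
  also have "\<dots> = infsum \<Phi> A"
    by (rule infsum_cong_neutral) (auto simp: A_def \<Phi>_def cc_def)
  also have "\<dots> = infsum (\<Psi> \<circ> h) A"
    by (rule infsum_cong) (auto simp: A_def \<Phi>_def \<Psi>_def h_def cc_def power2_eq_square)
  also have "\<dots> = infsum \<Psi> (h ` A)"
    by (rule infsum_reindex[symmetric]) (auto simp: inj_on_def h_def A_def ix_def)
  also have "\<dots> = infsum \<Psi> UNIV"
    by (rule infsum_cong_neutral) (auto simp: \<Psi>_def h_def A_def cK_zero dest!: notin_hA)
  also have "\<dots> = (\<Sum>\<^sub>\<infinity>la. \<Sum>\<^sub>\<infinity>k. \<Psi> (la, k))"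
    using infsum_Sigma'_banach[of "\<lambda>la k. \<Psi> (la, k)" UNIV "\<lambda>_. UNIV"] \<Psi>s by simp
  also have "\<dots> = (\<Sum>\<^sub>\<infinity>(l,a). cnj (B l a) * C l a)"
  proof (rule infsum_cong)
    fix la :: "nat \<times> nat"
    obtain l a where la: "la = (l,a)" by (cases la) auto
    have "((\<lambda>k. complex_of_real ((cK k a)^2)) has_sum complex_of_real 1) UNIV"
      by (rule has_sum_of_real[OF cK_sq_sum])
    from has_sum_cmult_left[OF this, of "cnj (B l a) * C l a"]
    show "(\<Sum>\<^sub>\<infinity>k. \<Psi> (la, k)) = (case la of (l,a) \<Rightarrow> cnj (B l a) * C l a)"
      unfolding la \<Psi>_def by (simp add: infsumI)
  qed
  also have "\<dots> = mtrace X" using TR(2)[OF hB hC X] by simp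
  finally show ?thesis .
qed

end


context bwd
begin

lemma Zk_eq:
  fixes S :: "nat set" and k :: int and v :: "nat \<Rightarrow> nat \<Rightarrow> complex" and M :: mat
  assumes fin: "finite S"
  defines "Sv \<equiv> {x\<in>S. 0 \<le> int x + k}"
  defines "vk \<equiv> (\<lambda>a u. if 0 \<le> int u - k \<and> nat (int u - k) \<in> S then complex_of_real (cc k (nat (int u - k))) * v a (nat (int u - k)) else 0)"
  shows "(\<Sum>x\<in>S. \<Sum>y\<in>S. cnj (v a x) * (complex_of_real (cc k x * cc k y) * M (ix x k) (ix y k)) * v b y)
    = (\<Sum>u\<in>(\<lambda>x. ix x k) ` Sv. \<Sum>u'\<in>(\<lambda>x. ix x k) ` Sv. cnj (vk a u) * M u u' * vk b u')"
proof -
  have finv: "finite Sv" using fin unfolding Sv_def by simp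
  have inj: "inj_on (\<lambda>x. ix x k) Sv" unfolding inj_on_def Sv_def ix_def by auto
  have vk_ix: "vk c (ix x k) = complex_of_real (cc k x) * v c x" if "x \<in> Sv" for c x
    using that unfolding vk_def Sv_def ix_def by auto
  have "(\<Sum>x\<in>S. \<Sum>y\<in>S. cnj (v a x) * (complex_of_real (cc k x * cc k y) * M (ix x k) (ix y k)) * v b y)
      = (\<Sum>x\<in>Sv. \<Sum>y\<in>S. cnj (v a x) * (complex_of_real (cc k x * cc k y) * M (ix x k) (ix y k)) * v b y)"
    by (rule sum.mono_neutral_right[OF fin]) (auto simp: Sv_def cc_def)
  also have "\<dots> = (\<Sum>x\<in>Sv. \<Sum>y\<in>Sv. cnj (v a x) * (complex_of_real (cc k x * cc k y) * M (ix x k) (ix y k)) * v b y)"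
    by (intro sum.cong refl sum.mono_neutral_right[OF fin]) (auto simp: Sv_def cc_def)
  also have "\<dots> = (\<Sum>x\<in>Sv. \<Sum>y\<in>Sv. cnj (vk a (ix x k)) * M (ix x k) (ix y k) * vk b (ix y k))"
    by (intro sum.cong refl) (simp add: vk_ix mult_ac)
  also have "\<dots> = (\<Sum>x\<in>Sv. \<Sum>u'\<in>(\<lambda>x. ix x k) ` Sv. cnj (vk a (ix x k)) * M (ix x k) u' * vk b u')"
    by (simp only: sum.reindex[OF inj] o_def)
  also have "\<dots> = (\<Sum>u\<in>(\<lambda>x. ix x k) ` Sv. \<Sum>u'\<in>(\<lambda>x. ix x k) ` Sv. cnj (vk a u) * M u u' * vk b u')"
    by (simp only: sum.reindex[OF inj] o_def)
  finally show ?thesis .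
qed

lemma tc_summable:
  assumes "trace_class X"
  shows "(\<lambda>k. complex_of_real (cc k i * cc k j) * X (ix i k) (ix j k)) summable_on UNIV"
proof -
  obtain B C where hB: "hilbert_schmidt B" and hC: "hilbert_schmidt C" and X: "\<And>a b. X a b = (\<Sum>\<^sub>\<infinity>l. cnj (B l a) * C l b)"
    using assms unfolding trace_class_def by blast
  show ?thesis by (rule core(2)[OF hB hC X])
qed

lemma Eop_cp:
  assumes tc: "\<And>a b. a < n \<Longrightarrow> b < n \<Longrightarrow> trace_class (Y a b)" and bp: "block_pos n Y"
  shows "block_pos n (\<lambda>a b. Eop (Y a b))"
  unfolding block_pos_def Let_def
proof (intro allI impI)
  fix S :: "nat set" and v :: "nat \<Rightarrow> nat \<Rightarrow> complex"
  assume fin: "finite S"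
  define t where "t = (\<lambda>a b x y k. complex_of_real (cc k x * cc k y) * Y a b (ix x k) (ix y k))"
  define Z where "Z = (\<lambda>k. \<Sum>a<n. \<Sum>b<n. \<Sum>x\<in>S. \<Sum>y\<in>S. cnj (v a x) * t a b x y k * v b y)"
  let ?z = "(\<Sum>a<n. \<Sum>b<n. \<Sum>i\<in>S. \<Sum>j\<in>S. cnj (v a i) * Eop (Y a b) i j * v b j)"
  have hz: "(Z has_sum ?z) UNIV" unfolding Z_def
  proof (intro has_sum_sum_fin fin finite_lessThan)
    fix a b x y assume ab: "a \<in> {..<n}" "b \<in> {..<n}"
    have "(t a b x y has_sum Eop (Y a b) x y) UNIV"
      unfolding t_def Eop_def using tc_summable[OF tc, of a b x y] ab by (simp add: has_sum_infsum)
    from has_sum_cmult_left[OF has_sum_cmult_right[OF this, of "cnj (v a x)"], of "v b y"]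
    show "((\<lambda>k. cnj (v a x) * t a b x y k * v b y) has_sum cnj (v a x) * Eop (Y a b) x y * v b y) UNIV" .
  qed
  have Zk: "Im (Z k) = 0 \<and> 0 \<le> Re (Z k)" for k
  proof -
    define Sv where "Sv = {x\<in>S. 0 \<le> int x + k}"
    define vk where "vk = (\<lambda>a u. if 0 \<le> int u - k \<and> nat (int u - k) \<in> S then complex_of_real (cc k (nat (int u - k))) * v a (nat (int u - k)) else 0)"
    have "Z k = (\<Sum>a<n. \<Sum>b<n. \<Sum>u\<in>(\<lambda>x. ix x k) ` Sv. \<Sum>u'\<in>(\<lambda>x. ix x k) ` Sv. cnj (vk a u) * Y a b u u' * vk b u')"
      unfolding Z_def t_def Sv_def vk_def by (intro sum.cong refl Zk_eq fin)
    moreover have fk: "finite ((\<lambda>x. ix x k) ` Sv)" using fin unfolding Sv_def by simp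
    note bp[unfolded block_pos_def Let_def, rule_format, OF fk, of vk]
    ultimately show ?thesis by simp
  qed
  have "((\<lambda>k. Im (Z k)) has_sum Im ?z) UNIV" by (rule has_sum_Im[OF hz])
  moreover have "((\<lambda>k. Im (Z k)) has_sum 0) UNIV" by (rule has_sum_0) (use Zk in auto)
  ultimately have "Im ?z = 0" using has_sum_unique by blast
  moreover have "0 \<le> Re ?z" by (rule has_sum_nonneg[OF has_sum_Re[OF hz]]) (use Zk in auto)
  ultimately show "Im ?z = 0 \<and> 0 \<le> Re ?z" by blast
qed

end


context bwd
begin

lemma Eop_add:
  assumes "trace_class X" "trace_class Y"
  shows "Eop (\<lambda>i j. X i j + Y i j) = (\<lambda>i j. Eop X i j + Eop Y i j)"
proof (intro ext)
  fix i j
  have "Eop (\<lambda>i j. X i j + Y i j) i j = (\<Sum>\<^sub>\<infinity>k. complex_of_real (cc k i * cc k j) * X (ix i k) (ix j k)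
       + complex_of_real (cc k i * cc k j) * Y (ix i k) (ix j k))"
    unfolding Eop_def by (simp add: distrib_left)
  also have "\<dots> = Eop X i j + Eop Y i j"
    unfolding Eop_def by (intro infsum_add tc_summable assms)
  finally show "Eop (\<lambda>i j. X i j + Y i j) i j = Eop X i j + Eop Y i j" .
qed

lemma Eop_scale: "Eop (\<lambda>i j. c * X i j) = (\<lambda>i j. c * Eop X i j)"
proof (intro ext)
  fix i j
  have "Eop (\<lambda>i j. c * X i j) i j = (\<Sum>\<^sub>\<infinity>k. c * (complex_of_real (cc k i * cc k j) * X (ix i k) (ix j k)))"
    unfolding Eop_def by (simp add: mult_ac)
  also have "\<dots> = c * Eop X i j" unfolding Eop_def by (rule infsum_cmult_right')
  finally show "Eop (\<lambda>i j. c * X i j) i j = c * Eop X i j" .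
qed

lemma Eop_rot: "Eop (rot \<phi> X) = rot \<phi> (Eop X)"
proof (intro ext)
  fix i j
  have pt: "complex_of_real (cc k i * cc k j) * rot \<phi> X (ix i k) (ix j k)
     = cis (\<phi> * real i) * (complex_of_real (cc k i * cc k j) * X (ix i k) (ix j k)) * cnj (cis (\<phi> * real j))" for k
  proof (cases "0 \<le> int i + k \<and> 0 \<le> int j + k")
    case True
    have ri: "real (ix i k) = real i + of_int k" and rj: "real (ix j k) = real j + of_int k"
      using True unfolding ix_def by auto
    have "cis (\<phi> * real (ix i k)) * cnj (cis (\<phi> * real (ix j k))) = cis (\<phi> * real i) * cnj (cis (\<phi> * real j))"
      unfolding ri rj by (simp add: cis_cnj cis_mult algebra_simps)
    then show ?thesis unfolding rot_def by (metis (no_types, lifting) mult.assoc mult.left_commute)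
  next
    case False
    then have "cc k i * cc k j = 0" unfolding cc_def by auto
    then show ?thesis by auto
  qed
  have "Eop (rot \<phi> X) i j = (\<Sum>\<^sub>\<infinity>k. cis (\<phi> * real i) * (complex_of_real (cc k i * cc k j) * X (ix i k) (ix j k)) * cnj (cis (\<phi> * real j)))"
    unfolding Eop_def pt ..
  also have "\<dots> = cis (\<phi> * real i) * Eop X i j * cnj (cis (\<phi> * real j))"
    unfolding Eop_def by (simp add: infsum_cmult_left' infsum_cmult_right')
  finally show "Eop (rot \<phi> X) i j = rot \<phi> (Eop X) i j" by (simp add: rot_def)
qed

lemma Eop_state: "Eop (sqrt_state_proj p) = sqrt_state_proj q"
proof (intro ext)
  fix i j
  have pt: "complex_of_real (cc k i * cc k j) * sqrt_state_proj p (ix i k) (ix j k)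
     = complex_of_real (w k * (sqrt (q i) * sqrt (q j)))" for k
  proof (cases "0 \<le> int i + k \<and> 0 \<le> int j + k")
    case True
    have a: "cc k i * sqrt (p (ix i k)) = sqrt (w k) * sqrt (q i)"
      using True cK_sqrt[of k "ix i k"] unfolding cc_def shift_vec_def ix_def by simp
    have b: "cc k j * sqrt (p (ix j k)) = sqrt (w k) * sqrt (q j)"
      using True cK_sqrt[of k "ix j k"] unfolding cc_def shift_vec_def ix_def by simp
    have "cc k i * cc k j * (sqrt (p (ix i k)) * sqrt (p (ix j k))) = (cc k i * sqrt (p (ix i k))) * (cc k j * sqrt (p (ix j k)))"
      by (simp add: mult_ac)
    also have "\<dots> = (sqrt (w k) * sqrt (w k)) * (sqrt (q i) * sqrt (q j))" unfolding a b by (simp add: mult_ac)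
    also have "\<dots> = w k * (sqrt (q i) * sqrt (q j))" using w0[of k] by simp
    finally show ?thesis unfolding sqrt_state_proj_def by (simp flip: of_real_mult)
  next
    case False
    then have l: "cc k i * cc k j = 0" unfolding cc_def by auto
    from False have "w k * q i = 0 \<or> w k * q j = 0" using support_wq[of i k] support_wq[of j k] by auto
    then have r: "w k * (sqrt (q i) * sqrt (q j)) = 0" by auto
    show ?thesis by (simp only: l r of_real_0 mult_zero_left)
  qed
  have "((\<lambda>k. complex_of_real (w k * (sqrt (q i) * sqrt (q j)))) has_sum complex_of_real (1 * (sqrt (q i) * sqrt (q j)))) UNIV"
    by (intro has_sum_of_real has_sum_cmult_left ws)
  then have "Eop (sqrt_state_proj p) i j = complex_of_real (sqrt (q i) * sqrt (q j))"
    unfolding Eop_def pt by (simp add: infsumI)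
  then show "Eop (sqrt_state_proj p) i j = sqrt_state_proj q i j" by (simp add: sqrt_state_proj_def)
qed

lemma Eop_det: "deterministic_u1_operation Eop"
  unfolding deterministic_u1_operation_def u1_operation_def
  by (auto simp: Eop_tc Eop_add Eop_scale Eop_cp Eop_trace Eop_rot)

end

theorem backward:
  fixes p q :: "nat \<Rightarrow> real"
  assumes "\<And>n. 0 \<le> p n" and "\<And>n. 0 \<le> q n"
    and "(p has_sum 1) UNIV" and "(q has_sum 1) UNIV"
    and "\<exists>w :: int \<Rightarrow> real. (\<forall>k. 0 \<le> w k \<and> w k \<le> 1) \<and> (w has_sum 1) UNIV \<and>
           (\<forall>m. ((\<lambda>k. w k * shift_vec k q m) has_sum p m) UNIV)"
  shows "\<exists>E. deterministic_u1_operation E \<and> E (sqrt_state_proj p) = sqrt_state_proj q"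
proof -
  obtain w :: "int \<Rightarrow> real" where w: "\<forall>k. 0 \<le> w k \<and> w k \<le> 1" "(w has_sum 1) UNIV"
    "\<forall>m. ((\<lambda>k. w k * shift_vec k q m) has_sum p m) UNIV" using assms(5) by blast
  interpret bwd p q w using assms(1-4) w by unfold_locales auto
  show ?thesis using Eop_det Eop_state by blast
qed

theorem theorem3:
  fixes p q :: "nat \<Rightarrow> real"
  assumes "\<And>n. 0 \<le> p n" and "\<And>n. 0 \<le> q n"
    and "(p has_sum 1) UNIV" and "(q has_sum 1) UNIV"
  shows "(\<exists>E. deterministic_u1_operation E \<and> E (sqrt_state_proj p) = sqrt_state_proj q)
     \<longleftrightarrow> (\<exists>w :: int \<Rightarrow> real. (\<forall>k. 0 \<le> w k \<and> w k \<le> 1) \<and> (w has_sum 1) UNIV \<and>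
           (\<forall>m. ((\<lambda>k. w k * shift_vec k q m) has_sum p m) UNIV))"
proof
  assume "\<exists>E. deterministic_u1_operation E \<and> E (sqrt_state_proj p) = sqrt_state_proj q"
  then obtain E where "deterministic_u1_operation E" "E (sqrt_state_proj p) = sqrt_state_proj q" by blast
  then show "\<exists>w :: int \<Rightarrow> real. (\<forall>k. 0 \<le> w k \<and> w k \<le> 1) \<and> (w has_sum 1) UNIV \<and>
           (\<forall>m. ((\<lambda>k. w k * shift_vec k q m) has_sum p m) UNIV)"
    by (rule forward[OF assms])
next
  assume "\<exists>w :: int \<Rightarrow> real. (\<forall>k. 0 \<le> w k \<and> w k \<le> 1) \<and> (w has_sum 1) UNIV \<and>
           (\<forall>m. ((\<lambda>k. w k * shift_vec k q m) has_sum p m) UNIV)"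
  then show "\<exists>E. deterministic_u1_operation E \<and> E (sqrt_state_proj p) = sqrt_state_proj q"
    by (rule backward[OF assms])
qed


end
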